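(* Let $|\psi\rangle,|\phi\rangle,|e\rangle,|f\rangle$ be unit vectors in $\mathbb{C}^2$ with $\langle e|f\rangle=0$. Then for every $\mathcal{X}\in\{\mathcal{R},\mathcal{UE},\mathcal{GE},\mathcal{C}\}$, $$\max_{\Psi\in\mathcal{X}}\left\{\frac12\langle e|\Psi(|\psi\rangle\langle\psi|)|e\rangle+\frac12\langle f|\Psi(|\phi\rangle\langle\phi|)|f\rangle\right\}=\frac12\left(1+\sqrt{1-|\langle\psi|\phi\rangle|^2}\right).$$
   Context: Channels are linear, completely positive, trace preserving maps on $\mathcal{L}(\mathbb{C}^2)$. $\mathcal{C}$ is the set of all quantum channels; $\mathcal{R}$ is the set of random unitary channels $A\mapsto\sum_xp_xU_xAU_x^\dagger$ ($\{p_x\}$ a finite probability distribution, $U_x$ unitary); $\mathcal{GE}$ is the set of entanglement breaking channels (those $\Psi$ with $(\mathrm{id}\otimes\Psi)(\rho)$ separable for every state $\rho$ on $\mathbb{C}^2\otimes\mathbb{C}^2$); $\mathcal{UE}$ is the set of unital ($\Psi(I)=I$) entanglement breaking channels. *)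

theory Defs
  imports "Jordan_Normal_Form.Schur_Decomposition"
begin

(* The complex order (HOL-Library.Complex_Order,
   imported by Jordan_Normal_Form) is used: 0 <= z iff z is real and nonnegative. *)

definition unit_vec2 :: "complex vec \<Rightarrow> bool" where
  "unit_vec2 v \<longleftrightarrow> v \<in> carrier_vec 2 \<and> v \<bullet> conjugate v = 1"

definition braket :: "complex vec \<Rightarrow> complex vec \<Rightarrow> complex" where
  "braket v w = w \<bullet> conjugate v"

definition sandwich :: "complex vec \<Rightarrow> complex mat \<Rightarrow> complex vec \<Rightarrow> complex" where
  "sandwich v M w = braket v (M *\<^sub>v w)"

definition ketbra :: "complex vec \<Rightarrow> complex vec \<Rightarrow> complex mat" where
  "ketbra v w = mat (dim_vec v) (dim_vec w) (\<lambda>(i,j). v $ i * cnj (w $ j))"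

definition psd :: "nat \<Rightarrow> complex mat \<Rightarrow> bool" where
  "psd n M \<longleftrightarrow> M \<in> carrier_mat n n \<and> (\<forall>v \<in> carrier_vec n. 0 \<le> braket v (M *\<^sub>v v))"

definition mtrace :: "complex mat \<Rightarrow> complex" where
  "mtrace M = (\<Sum>i<dim_row M. M $$ (i,i))"

definition density :: "nat \<Rightarrow> complex mat \<Rightarrow> bool" where
  "density n M \<longleftrightarrow> psd n M \<and> mtrace M = 1"

(* Kronecker product of a 2x2 and a 2x2 matrix; index (i,a) of C^2 (x) C^2 is 2*i+a *)
definition kron2 :: "complex mat \<Rightarrow> complex mat \<Rightarrow> complex mat" where
  "kron2 A B = mat 4 4 (\<lambda>(r,c). A $$ (r div 2, c div 2) * B $$ (r mod 2, c mod 2))"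

(* the (i,j)-th 2x2 block of a (2k)x(2k) matrix, viewed as an operator on C^k (x) C^2 *)
definition block2 :: "complex mat \<Rightarrow> nat \<Rightarrow> nat \<Rightarrow> complex mat" where
  "block2 M i j = mat 2 2 (\<lambda>(a,b). M $$ (2*i+a, 2*j+b))"

definition id_tensor :: "nat \<Rightarrow> (complex mat \<Rightarrow> complex mat) \<Rightarrow> complex mat \<Rightarrow> complex mat" where
  "id_tensor k \<Psi> M = mat (k*2) (k*2) (\<lambda>(r,c). \<Psi> (block2 M (r div 2) (c div 2)) $$ (r mod 2, c mod 2))"

definition linear_map2 :: "(complex mat \<Rightarrow> complex mat) \<Rightarrow> bool" where
  "linear_map2 \<Psi> \<longleftrightarrow>
     (\<forall>A \<in> carrier_mat 2 2. \<Psi> A \<in> carrier_mat 2 2) \<and>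
     (\<forall>A \<in> carrier_mat 2 2. \<forall>B \<in> carrier_mat 2 2. \<Psi> (A + B) = \<Psi> A + \<Psi> B) \<and>
     (\<forall>A \<in> carrier_mat 2 2. \<forall>c. \<Psi> (c \<cdot>\<^sub>m A) = c \<cdot>\<^sub>m \<Psi> A)"

definition completely_positive :: "(complex mat \<Rightarrow> complex mat) \<Rightarrow> bool" where
  "completely_positive \<Psi> \<longleftrightarrow>
     (\<forall>k. \<forall>M. psd (k*2) M \<longrightarrow> psd (k*2) (id_tensor k \<Psi> M))"

definition trace_preserving :: "(complex mat \<Rightarrow> complex mat) \<Rightarrow> bool" where
  "trace_preserving \<Psi> \<longleftrightarrow> (\<forall>A \<in> carrier_mat 2 2. mtrace (\<Psi> A) = mtrace A)"

definition channels :: "(complex mat \<Rightarrow> complex mat) set" where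
  "channels = {\<Psi>. linear_map2 \<Psi> \<and> completely_positive \<Psi> \<and> trace_preserving \<Psi>}"

definition unitary2 :: "complex mat \<Rightarrow> bool" where
  "unitary2 U \<longleftrightarrow> U \<in> carrier_mat 2 2 \<and> U * mat_adjoint U = 1\<^sub>m 2"

definition random_unitary :: "(complex mat \<Rightarrow> complex mat) set" where
  "random_unitary = {\<Psi>. \<exists>(n::nat) (p::nat \<Rightarrow> real) U.
      (\<forall>x<n. p x \<ge> 0 \<and> unitary2 (U x)) \<and> (\<Sum>x<n. p x) = 1 \<and>
      (\<forall>A \<in> carrier_mat 2 2. \<Psi> A =
         mat 2 2 (\<lambda>(i,j). \<Sum>x<n. complex_of_real (p x) * (U x * A * mat_adjoint (U x)) $$ (i,j)))}"

definition separable :: "complex mat \<Rightarrow> bool" where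
  "separable M \<longleftrightarrow> (\<exists>(n::nat) (p::nat \<Rightarrow> real) \<rho>A \<rho>B.
      (\<forall>x<n. p x \<ge> 0 \<and> density 2 (\<rho>A x) \<and> density 2 (\<rho>B x)) \<and> (\<Sum>x<n. p x) = 1 \<and>
      M = mat 4 4 (\<lambda>(i,j). \<Sum>x<n. complex_of_real (p x) * kron2 (\<rho>A x) (\<rho>B x) $$ (i,j)))"

definition ent_breaking :: "(complex mat \<Rightarrow> complex mat) set" where
  "ent_breaking = {\<Psi> \<in> channels. \<forall>\<rho>. density 4 \<rho> \<longrightarrow> separable (id_tensor 2 \<Psi> \<rho>)}"

definition unital_ent_breaking :: "(complex mat \<Rightarrow> complex mat) set" where
  "unital_ent_breaking = {\<Psi> \<in> ent_breaking. \<Psi> (1\<^sub>m 2) = 1\<^sub>m 2}"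

definition discr_obj :: "complex vec \<Rightarrow> complex vec \<Rightarrow> complex vec \<Rightarrow> complex vec
    \<Rightarrow> (complex mat \<Rightarrow> complex mat) \<Rightarrow> complex" where
  "discr_obj \<psi> \<phi> e f \<Psi> =
     1/2 * sandwich e (\<Psi> (ketbra \<psi> \<psi>)) e + 1/2 * sandwich f (\<Psi> (ketbra \<phi> \<phi>)) f"

end

theory Submission
  imports Defs
begin


lemma sum2: "(\<Sum>i<2. (g::nat\<Rightarrow>_) i) = g 0 + (g 1 :: 'a::comm_monoid_add)"
  by (simp add: numeral_2_eq_2)
lemma sum2': "(\<Sum>i\<in>{0..<2}. (g::nat\<Rightarrow>_) i) = g 0 + (g 1 :: 'a::comm_monoid_add)"
  by (simp add: numeral_2_eq_2)
lemma less2: "i < (2::nat) \<Longrightarrow> i = 0 \<or> i = 1" by auto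

lemma braket2: "v \<in> carrier_vec 2 \<Longrightarrow> w \<in> carrier_vec 2 \<Longrightarrow>
   braket v w = cnj (v$0) * w$0 + cnj (v$1) * w$1"
  unfolding braket_def scalar_prod_def by (simp add: sum2' mult.commute)

lemma mulv2: "M \<in> carrier_mat 2 2 \<Longrightarrow> w \<in> carrier_vec 2 \<Longrightarrow>
   M *\<^sub>v w = vec 2 (\<lambda>i. M$$(i,0) * w$0 + M$$(i,1) * w$1)"
  by (rule eq_vecI) (auto simp: scalar_prod_def sum2' row_def)

lemma sandwich2: "u \<in> carrier_vec 2 \<Longrightarrow> w \<in> carrier_vec 2 \<Longrightarrow> M \<in> carrier_mat 2 2 \<Longrightarrow>
   sandwich u M w = cnj (u$0) * (M$$(0,0) * w$0 + M$$(0,1) * w$1) + cnj (u$1) * (M$$(1,0) * w$0 + M$$(1,1) * w$1)"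
  unfolding sandwich_def by (simp add: mulv2 braket2)

lemma mtrace2: "M \<in> carrier_mat 2 2 \<Longrightarrow> mtrace M = M$$(0,0) + M$$(1,1)"
  unfolding mtrace_def by (simp add: sum2)

lemma unit2: "unit_vec2 v \<Longrightarrow> v \<in> carrier_vec 2 \<and> v$0 * cnj (v$0) + v$1 * cnj (v$1) = 1"
  unfolding unit_vec2_def scalar_prod_def by (auto simp: sum2')

lemma ketbra_carrier: "v \<in> carrier_vec 2 \<Longrightarrow> w \<in> carrier_vec 2 \<Longrightarrow> ketbra v w \<in> carrier_mat 2 2"
  unfolding ketbra_def by auto
lemma ketbra_idx: "v \<in> carrier_vec 2 \<Longrightarrow> w \<in> carrier_vec 2 \<Longrightarrow> i < 2 \<Longrightarrow> j < 2 \<Longrightarrow>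
   ketbra v w $$ (i,j) = v$i * cnj (w$j)"
  unfolding ketbra_def by auto

lemma complete2:
  assumes e: "unit_vec2 e" and f: "unit_vec2 f" and ef: "braket e f = 0"
  shows "e$0 * cnj (e$0) + f$0 * cnj (f$0) = 1" "e$1 * cnj (e$1) + f$1 * cnj (f$1) = 1"
        "e$0 * cnj (e$1) + f$0 * cnj (f$1) = 0" "e$1 * cnj (e$0) + f$1 * cnj (f$0) = 0"
proof -
  have ec: "e \<in> carrier_vec 2" and e1: "e$0 * cnj (e$0) + e$1 * cnj (e$1) = 1" using unit2[OF e] by auto
  have fc: "f \<in> carrier_vec 2" and f1: "f$0 * cnj (f$0) + f$1 * cnj (f$1) = 1" using unit2[OF f] by auto
  have ef': "cnj (e$0) * f$0 + cnj (e$1) * f$1 = 0" using ef by (simp add: braket2 ec fc)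
  have fe': "e$0 * cnj (f$0) + e$1 * cnj (f$1) = 0"
  proof -
    have "cnj (cnj (e$0) * f$0 + cnj (e$1) * f$1) = 0" using ef' by simp
    thus ?thesis by (simp add: mult.commute)
  qed
  define N :: "complex mat" where "N = mat 2 2 (\<lambda>(i,j). if j = 0 then e$i else f$i)"
  define N' :: "complex mat" where "N' = mat 2 2 (\<lambda>(i,j). if i = 0 then cnj (e$j) else cnj (f$j))"
  have "N' * N = 1\<^sub>m 2"
    apply (rule eq_matI)
    using e1 f1 ef' fe' by (auto simp: N_def N'_def scalar_prod_def sum2' row_def col_def mult.commute dest!: less2)
  hence NN: "N * N' = 1\<^sub>m 2"
    by (rule mat_mult_left_right_inverse[rotated 2]) (auto simp: N_def N'_def)
  have "(N * N') $$ (i,j) = e$i * cnj (e$j) + f$i * cnj (f$j)" if "i<2" "j<2" for i j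
    using that by (simp add: N_def N'_def scalar_prod_def sum2' row_def col_def)
  from this[of 0 0] this[of 1 1] this[of 0 1] this[of 1 0] NN
  show "e$0 * cnj (e$0) + f$0 * cnj (f$0) = 1" "e$1 * cnj (e$1) + f$1 * cnj (f$1) = 1"
        "e$0 * cnj (e$1) + f$0 * cnj (f$1) = 0" "e$1 * cnj (e$0) + f$1 * cnj (f$0) = 0"
    by auto
qed


lemma real_amgm_aux:
  fixes t A D :: real
  assumes "0 \<le> t" "0 \<le> A" "0 \<le> D" "t^2 \<le> A * D"
  shows "2 * t \<le> A + D"
proof (rule power2_le_imp_le)
  have e: "(A+D)^2 = 4*(A*D) + (A-D)^2" by (simp add: power2_eq_square algebra_simps)
  have "(2*t)^2 = 4 * t^2" by (simp add: power2_eq_square)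
  also have "\<dots> \<le> 4 * (A*D)" using assms(4) by linarith
  also have "\<dots> \<le> (A+D)^2" unfolding e by simp
  finally show "(2*t)^2 \<le> (A+D)^2" .
  show "0 \<le> A + D" using assms by linarith
qed

lemma psd2_crit:
  fixes M :: "complex mat" and \<alpha> \<delta> :: real
  assumes M: "M \<in> carrier_mat 2 2" and a: "M$$(0,0) = of_real \<alpha>" and d: "M$$(1,1) = of_real \<delta>"
    and h: "M$$(1,0) = cnj (M$$(0,1))" and a0: "\<alpha> \<ge> 0" and d0: "\<delta> \<ge> 0"
    and det: "(cmod (M$$(0,1)))^2 \<le> \<alpha> * \<delta>"
  shows "psd 2 M"
  unfolding psd_def
proof (intro conjI ballI M)
  fix v :: "complex vec" assume v: "v \<in> carrier_vec 2"
  define b where "b = M$$(0,1)"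
  define z where "z = cnj (v$0) * b * v$1"
  define A where "A = \<alpha> * (cmod (v$0))^2"
  define D where "D = \<delta> * (cmod (v$1))^2"
  have eq: "braket v (M *\<^sub>v v) = of_real (A + D + 2 * Re z)"
  proof -
    have "braket v (M *\<^sub>v v) = cnj (v$0) * (of_real \<alpha> * v$0 + b * v$1) + cnj (v$1) * (cnj b * v$0 + of_real \<delta> * v$1)"
      using M v a d h by (simp add: mulv2 braket2 b_def One_nat_def)
    also have "\<dots> = of_real \<alpha> * (v$0 * cnj (v$0)) + of_real \<delta> * (v$1 * cnj (v$1)) + (z + cnj z)"
      unfolding z_def by (simp only: complex_cnj_mult complex_cnj_cnj) (simp add: algebra_simps)
    also have "\<dots> = of_real (A + D + 2 * Re z)"
    proof -
      have n: "v$0 * cnj (v$0) = of_real ((cmod (v$0))^2)" "v$1 * cnj (v$1) = of_real ((cmod (v$1))^2)"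
        by (metis complex_norm_square of_real_power)+
      have "z + cnj z = of_real (2 * Re z)" by (simp add: complex_add_cnj)
      thus ?thesis unfolding n A_def D_def by simp
    qed
    finally show ?thesis .
  qed
  have t: "(cmod (v$0) * cmod b * cmod (v$1))^2 \<le> A * D"
  proof -
    have "(cmod (v$0) * cmod b * cmod (v$1))^2 = (cmod b)^2 * ((cmod (v$0))^2 * (cmod (v$1))^2)"
      by (simp add: power_mult_distrib)
    also have "\<dots> \<le> (\<alpha> * \<delta>) * ((cmod (v$0))^2 * (cmod (v$1))^2)"
      using det b_def by (intro mult_right_mono) auto
    also have "\<dots> = A * D" by (simp add: A_def D_def)
    finally show ?thesis .
  qed
  have "2 * (cmod (v$0) * cmod b * cmod (v$1)) \<le> A + D"
    by (rule real_amgm_aux[OF _ _ _ t]) (auto simp: A_def D_def a0 d0)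
  moreover have "- Re z \<le> cmod (v$0) * cmod b * cmod (v$1)"
  proof -
    have "- Re z \<le> cmod z" using abs_Re_le_cmod[of z] by linarith
    also have "cmod z = cmod (v$0) * cmod b * cmod (v$1)" by (simp add: z_def norm_mult)
    finally show ?thesis .
  qed
  ultimately have "0 \<le> A + D + 2 * Re z" by linarith
  thus "0 \<le> braket v (M *\<^sub>v v)" unfolding eq by (simp add: less_eq_complex_def)
qed


definition mat2 :: "complex \<Rightarrow> complex \<Rightarrow> complex \<Rightarrow> complex \<Rightarrow> complex mat" where
  "mat2 a b c d = mat 2 2 (\<lambda>(i,j). if i = 0 then (if j = 0 then a else b) else (if j = 0 then c else d))"

lemma mat2_carrier[simp]: "mat2 a b c d \<in> carrier_mat 2 2" unfolding mat2_def by auto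
lemma mat2_idx[simp]: "mat2 a b c d $$ (0,0) = a" "mat2 a b c d $$ (0,1) = b"
   "mat2 a b c d $$ (1,0) = c" "mat2 a b c d $$ (1,1) = d"
   "mat2 a b c d $$ (0,Suc 0) = b" "mat2 a b c d $$ (Suc 0,0) = c" "mat2 a b c d $$ (Suc 0,Suc 0) = d"
  unfolding mat2_def by auto
lemma mat2_dim[simp]: "dim_row (mat2 a b c d) = 2" "dim_col (mat2 a b c d) = 2"
  unfolding mat2_def by auto

lemma key_ident:
  fixes a A b B g G h H :: complex
  assumes "a*A + b*B = 1" "g*G + h*H = 1"
  shows "(a*A - g*G)^2 + (a*B - g*H)*(A*b - G*h) = 1 - (A*g + B*h)*(a*G + b*H)"
proof -
  have "(a*A - g*G)^2 + (a*B - g*H)*(A*b - G*h) - (1 - (A*g + B*h)*(a*G + b*H))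
     = (a*A + b*B - 1) * (1 + a*A - g*G + (g*G + h*H - 1)) + (g*G + h*H - 1) * (1 + g*G - a*A)"
    by (simp add: power2_eq_square algebra_simps)
  thus ?thesis using assms by simp
qed

lemma sandwich_add:
  "u \<in> carrier_vec 2 \<Longrightarrow> X \<in> carrier_mat 2 2 \<Longrightarrow> Y \<in> carrier_mat 2 2 \<Longrightarrow>
   sandwich u (X + Y) u = sandwich u X u + sandwich u Y u"
  by (simp add: sandwich2 algebra_simps)

lemma sandwich_complete:
  assumes e: "unit_vec2 e" and f: "unit_vec2 f" and ef: "braket e f = 0" and X: "X \<in> carrier_mat 2 2"
  shows "sandwich e X e + sandwich f X f = mtrace X"
proof -
  have ec: "e \<in> carrier_vec 2" and fc: "f \<in> carrier_vec 2" using e f unit2 by auto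
  note c = complete2[OF e f ef]
  have "sandwich e X e + sandwich f X f =
     X$$(0,0) * (e$0 * cnj (e$0) + f$0 * cnj (f$0)) + X$$(0,1) * (e$1 * cnj (e$0) + f$1 * cnj (f$0))
   + X$$(1,0) * (e$0 * cnj (e$1) + f$0 * cnj (f$1)) + X$$(1,1) * (e$1 * cnj (e$1) + f$1 * cnj (f$1))"
    using X ec fc by (simp add: sandwich2 algebra_simps)
  also have "\<dots> = mtrace X" using X c by (simp add: mtrace2)
  finally show ?thesis .
qed

lemma psd_sandwich: "psd 2 M \<Longrightarrow> u \<in> carrier_vec 2 \<Longrightarrow> 0 \<le> sandwich u M u"
  unfolding psd_def sandwich_def by auto


lemma lin4:
  fixes a b c d :: complex
  assumes "a + b = 1" "c + d = 1" shows "a - c = -(b - d)"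
proof -
  have "a = 1 - b" "c = 1 - d" using assms by (simp_all add: eq_diff_eq)
  thus ?thesis by simp
qed

lemma nsq: "(complex_of_real (cmod z))^2 = z * cnj z"
  by (metis complex_norm_square of_real_power)

lemma delta_facts:
  assumes psi: "unit_vec2 \<psi>" and phi: "unit_vec2 \<phi>"
  defines "x \<equiv> (cmod (\<psi>$0))^2 - (cmod (\<phi>$0))^2"
      and "y \<equiv> \<psi>$0 * cnj (\<psi>$1) - \<phi>$0 * cnj (\<phi>$1)"
      and "l \<equiv> sqrt (1 - (cmod (braket \<psi> \<phi>))^2)"
  shows "x^2 + (cmod y)^2 = l^2" "0 \<le> l" "\<bar>x\<bar> \<le> l"
    "complex_of_real x = \<psi>$0 * cnj (\<psi>$0) - \<phi>$0 * cnj (\<phi>$0)"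
    "complex_of_real x = - (\<psi>$1 * cnj (\<psi>$1) - \<phi>$1 * cnj (\<phi>$1))"
proof -
  have pc: "\<psi> \<in> carrier_vec 2" and p1: "\<psi>$0 * cnj (\<psi>$0) + \<psi>$1 * cnj (\<psi>$1) = 1" using unit2[OF psi] by auto
  have fc: "\<phi> \<in> carrier_vec 2" and f1: "\<phi>$0 * cnj (\<phi>$0) + \<phi>$1 * cnj (\<phi>$1) = 1" using unit2[OF phi] by auto
  define c where "c = braket \<psi> \<phi>"
  have c: "c = cnj (\<psi>$0) * \<phi>$0 + cnj (\<psi>$1) * \<phi>$1" unfolding c_def using pc fc by (simp add: braket2)
  have K: "(\<psi>$0 * cnj (\<psi>$0) - \<phi>$0 * cnj (\<phi>$0))^2 + y * cnj y = 1 - c * cnj c"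
    using key_ident[OF p1 f1] unfolding y_def c by (simp add: mult.commute)
  have nx: "complex_of_real x = \<psi>$0 * cnj (\<psi>$0) - \<phi>$0 * cnj (\<phi>$0)"
    unfolding x_def by (simp add: nsq)
  show "complex_of_real x = \<psi>$0 * cnj (\<psi>$0) - \<phi>$0 * cnj (\<phi>$0)" by (rule nx)
  show "complex_of_real x = - (\<psi>$1 * cnj (\<psi>$1) - \<phi>$1 * cnj (\<phi>$1))"
    unfolding nx using lin4[OF p1 f1] .
  have "complex_of_real (x^2 + (cmod y)^2) = complex_of_real (1 - (cmod c)^2)"
    using K by (simp add: nx nsq)
  hence E: "x^2 + (cmod y)^2 = 1 - (cmod c)^2" using of_real_eq_iff by blast
  have nn: "0 \<le> 1 - (cmod c)^2" unfolding E[symmetric] by simp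
  have "l^2 = 1 - (cmod c)^2" unfolding l_def c_def using real_sqrt_pow2[OF nn[unfolded c_def]] .
  then show l2: "x^2 + (cmod y)^2 = l^2" using E by simp
  show l0: "0 \<le> l" unfolding l_def using real_sqrt_ge_zero[OF nn[unfolded c_def]] .
  have "\<bar>x\<bar>^2 \<le> l^2" unfolding l2[symmetric] by simp
  thus "\<bar>x\<bar> \<le> l" using l0 by (rule power2_le_imp_le)
qed


lemma ketbra_self_trace: "unit_vec2 v \<Longrightarrow> mtrace (ketbra v v) = 1"
  using unit2[of v] by (simp add: mtrace2 ketbra_carrier ketbra_idx)

lemma lin_comb:
  fixes s1 sb sa s2 t2 ta L :: complex
  assumes "s1 + sb = sa + s2" "s2 + t2 = 1" "sa + ta = L"
  shows "1/2 * s1 + 1/2 * t2 = (1 + L)/2 - (sb + ta)/2"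
proof -
  have a: "s1 = L - ta + s2 - sb" using assms(1,3) by (metis add_diff_cancel_right' diff_add_cancel eq_diff_eq)
  have b: "t2 = 1 - s2" using assms(2) by (simp add: eq_diff_eq add.commute)
  show ?thesis unfolding a b by (simp add: field_simps)
qed

lemma UB:
  assumes psi: "unit_vec2 \<psi>" and phi: "unit_vec2 \<phi>" and e: "unit_vec2 e" and f: "unit_vec2 f"
    and ef: "braket e f = 0"
    and cl: "\<forall>A\<in>carrier_mat 2 2. \<Psi> A \<in> carrier_mat 2 2"
    and add: "\<forall>A\<in>carrier_mat 2 2. \<forall>B\<in>carrier_mat 2 2. \<Psi> (A + B) = \<Psi> A + \<Psi> B"
    and pos: "\<forall>M. psd 2 M \<longrightarrow> psd 2 (\<Psi> M)"
    and tp: "\<forall>A\<in>carrier_mat 2 2. mtrace (\<Psi> A) = mtrace A"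
  shows "discr_obj \<psi> \<phi> e f \<Psi> \<le> complex_of_real ((1 + sqrt (1 - (cmod (braket \<psi> \<phi>))^2)) / 2)"
proof -
  define x where "x = (cmod (\<psi>$0))^2 - (cmod (\<phi>$0))^2"
  define y where "y = \<psi>$0 * cnj (\<psi>$1) - \<phi>$0 * cnj (\<phi>$1)"
  define l where "l = sqrt (1 - (cmod (braket \<psi> \<phi>))^2)"
  note D = delta_facts[OF psi phi, folded x_def y_def l_def]
  have pc: "\<psi> \<in> carrier_vec 2" and fc: "\<phi> \<in> carrier_vec 2"
   and ec: "e \<in> carrier_vec 2" and fc': "f \<in> carrier_vec 2" using unit2 psi phi e f by auto
  define r1 where "r1 = ketbra \<psi> \<psi>"
  define r2 where "r2 = ketbra \<phi> \<phi>"
  define A' where "A' = mat2 (of_real ((l+x)/2)) (y/2) (cnj y/2) (of_real ((l-x)/2))"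
  define B' where "B' = mat2 (of_real ((l-x)/2)) (-y/2) (-cnj y/2) (of_real ((l+x)/2))"
  have r1c: "r1 \<in> carrier_mat 2 2" and r2c: "r2 \<in> carrier_mat 2 2"
    unfolding r1_def r2_def using pc fc by (auto intro: ketbra_carrier)
  have Ac: "A' \<in> carrier_mat 2 2" and Bc: "B' \<in> carrier_mat 2 2" unfolding A'_def B'_def by auto
  have yy: "(cmod y)^2 = l^2 - x^2" using D(1) by simp
  have yy2: "cmod y * cmod y = l*l - x*x" using yy by (simp add: power2_eq_square)
  have lx: "l + x \<ge> 0" "l - x \<ge> 0" using D(3) by auto
  have Apsd: "psd 2 A'" unfolding A'_def
    by (rule psd2_crit[of _ "(l+x)/2" "(l-x)/2"]) (use lx in \<open>auto simp: norm_divide power_divide yy yy2 power2_eq_square algebra_simps\<close>)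
  have Bpsd: "psd 2 B'" unfolding B'_def
    by (rule psd2_crit[of _ "(l-x)/2" "(l+x)/2"]) (use lx in \<open>auto simp: norm_divide power_divide yy yy2 power2_eq_square algebra_simps\<close>)
  have eqm: "r1 + B' = A' + r2"
  proof (rule eq_matI)
    fix i j assume "i < dim_row (A' + r2)" "j < dim_col (A' + r2)"
    hence ij: "i < 2" "j < 2" using Ac r2c by auto
    have x1: "\<psi>$0 * cnj (\<psi>$0) = of_real x + \<phi>$0 * cnj (\<phi>$0)" using D(4) by simp
    have x2: "\<psi>$1 * cnj (\<psi>$1) = - of_real x + \<phi>$1 * cnj (\<phi>$1)" using D(5) by simp
    have y1: "\<psi>$0 * cnj (\<psi>$1) = y + \<phi>$0 * cnj (\<phi>$1)" unfolding y_def by simp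
    have y2: "\<psi>$1 * cnj (\<psi>$0) = cnj y + \<phi>$1 * cnj (\<phi>$0)" unfolding y_def by (simp add: mult.commute)
    show "(r1 + B') $$ (i,j) = (A' + r2) $$ (i,j)"
      using ij r1c r2c Ac Bc pc fc
      apply (simp add: r1_def r2_def ketbra_idx)
      apply (elim less2[THEN disjE]; simp add: A'_def B'_def x1 x2 y1 y2 x2[unfolded One_nat_def] y1[unfolded One_nat_def] y2[unfolded One_nat_def])
      apply (simp_all add: field_simps)
      done
  qed (use r2c Bc in auto)
  define se where "se X = sandwich e X e" for X
  define sf where "sf X = sandwich f X f" for X
  have "\<Psi> (r1 + B') = \<Psi> (A' + r2)" using eqm by simp
  hence "\<Psi> r1 + \<Psi> B' = \<Psi> A' + \<Psi> r2" using add r1c r2c Ac Bc by simp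
  hence h1: "se (\<Psi> r1) + se (\<Psi> B') = se (\<Psi> A') + se (\<Psi> r2)"
    unfolding se_def using sandwich_add ec cl r1c r2c Ac Bc by metis
  have h2: "se (\<Psi> r2) + sf (\<Psi> r2) = 1"
    unfolding se_def sf_def using sandwich_complete[OF e f ef] cl tp r2c ketbra_self_trace[OF phi]
    unfolding r2_def by metis
  have trA: "mtrace A' = of_real l" unfolding A'_def by (simp add: mtrace2 field_simps)
  have h3: "se (\<Psi> A') + sf (\<Psi> A') = of_real l"
    unfolding se_def sf_def using sandwich_complete[OF e f ef] cl tp Ac trA by metis
  have n1: "0 \<le> se (\<Psi> B')" unfolding se_def using pos Bpsd psd_sandwich ec by blast
  have n2: "0 \<le> sf (\<Psi> A')" unfolding sf_def using pos Apsd psd_sandwich fc' by blast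
  have obj: "discr_obj \<psi> \<phi> e f \<Psi> = 1/2 * se (\<Psi> r1) + 1/2 * sf (\<Psi> r2)"
    unfolding discr_obj_def se_def sf_def r1_def r2_def ..
  have "discr_obj \<psi> \<phi> e f \<Psi> = (1 + of_real l)/2 - (se (\<Psi> B') + sf (\<Psi> A'))/2"
    unfolding obj by (rule lin_comb[OF h1 h2 h3])
  also have "\<dots> \<le> complex_of_real ((1 + l) / 2)"
  proof -
    have r: "0 \<le> Re (se (\<Psi> B'))" "0 \<le> Re (sf (\<Psi> A'))" "Im (se (\<Psi> B')) = 0" "Im (sf (\<Psi> A')) = 0"
      using n1 n2 by (simp_all add: less_eq_complex_def)
    define Rb where "Rb = Re (se (\<Psi> B'))"
    define Ra where "Ra = Re (sf (\<Psi> A'))"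
    have sb: "se (\<Psi> B') = of_real Rb" using r unfolding Rb_def by (simp add: complex_eq_iff)
    have sa: "sf (\<Psi> A') = of_real Ra" using r unfolding Ra_def by (simp add: complex_eq_iff)
    have "(1 + complex_of_real l)/2 - (se (\<Psi> B') + sf (\<Psi> A'))/2 = complex_of_real ((1+l)/2 - (Rb + Ra)/2)"
      unfolding sb sa by simp
    moreover have "(1+l)/2 - (Rb + Ra)/2 \<le> (1+l)/2" using r unfolding Rb_def Ra_def by (simp add: field_simps)
    ultimately show ?thesis by (metis Im_complex_of_real Re_complex_of_real less_eq_complex_def)
  qed
  finally show ?thesis unfolding l_def .
qed


definition v2 :: "complex \<Rightarrow> complex \<Rightarrow> complex vec" where
  "v2 a b = vec 2 (\<lambda>i. if i = 0 then a else b)"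
lemma v2_simps[simp]: "v2 a b $ 0 = a" "v2 a b $ 1 = b" "v2 a b $ Suc 0 = b" "v2 a b \<in> carrier_vec 2" "dim_vec (v2 a b) = 2"
  unfolding v2_def by auto

lemma unit_v2: "a * cnj a + b * cnj b = 1 \<Longrightarrow> unit_vec2 (v2 a b)"
  unfolding unit_vec2_def scalar_prod_def by (simp add: sum2')

lemma exists_p:
  fixes x l :: real and y :: complex
  assumes xy: "x^2 + (cmod y)^2 = l^2" and xl: "\<bar>x\<bar> \<le> l"
  shows "\<exists>a b. a * cnj a + b * cnj b = 1 \<and>
     cnj a * (of_real x * a + y * b) + cnj b * (cnj y * a - of_real x * b) = of_real l"
proof (cases "l + x > 0")
  case True
  define P where "P = l + x"
  have l0: "l > 0" using True xl by linarith
  have P0: "P > 0" using True P_def by simp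
  have yr: "(cmod y)^2 = (l - x) * P" using xy unfolding P_def by (simp add: power2_eq_square algebra_simps)
  have yy: "y * cnj y = of_real ((l - x) * P)" using yr by (metis nsq of_real_power)
  have yy': "cnj y * y = of_real ((l - x) * P)" using yy by (simp add: mult.commute)
  define r where "r = sqrt (2 * l * P)"
  have rpos: "r > 0" unfolding r_def using l0 P0 by simp
  have r2: "r * r = 2 * l * P" unfolding r_def using l0 P0 by simp
  define a where "a = complex_of_real (P / r)"
  define b where "b = cnj y * of_real (1 / r)"
  show ?thesis
  proof (intro exI conjI)
    have "a * cnj a + b * cnj b = of_real (P / r * (P / r)) + (y * cnj y) * of_real (1/r * (1/r))"
      unfolding a_def b_def by (simp add: algebra_simps)
    also have "\<dots> = of_real (P / r * (P / r) + (l - x) * P * (1/r * (1/r)))"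
      unfolding yy by simp
    also have "P / r * (P / r) + (l - x) * P * (1/r * (1/r)) = (P * P + (l - x) * P) / (r * r)"
      using rpos by (simp add: field_simps)
    also have "\<dots> = 1"
    proof -
      have "P * P + (l - x) * P = 2 * l * P" unfolding P_def by (simp add: algebra_simps)
      moreover have "2 * l * P \<noteq> 0" using l0 P0 by simp
      ultimately show ?thesis unfolding r2 by simp
    qed
    finally show "a * cnj a + b * cnj b = 1" by simp
    have "cnj a * (of_real x * a + y * b) + cnj b * (cnj y * a - of_real x * b)
        = of_real (P/r * (x * (P/r))) + (y * cnj y) * of_real (P/r * (1/r)) + (y * cnj y) * of_real (1/r * (P/r)) - (y * cnj y) * of_real (x * (1/r * (1/r)))"
      unfolding a_def b_def by (simp add: algebra_simps)
    also have "\<dots> = of_real (P/r * (x * (P/r)) + (l - x) * P * (P/r * (1/r)) + (l - x) * P * (1/r * (P/r)) - (l - x) * P * (x * (1/r * (1/r))))"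
      unfolding yy by simp
    also have "(P/r * (x * (P/r)) + (l - x) * P * (P/r * (1/r)) + (l - x) * P * (1/r * (P/r)) - (l - x) * P * (x * (1/r * (1/r))))
       = (P * P * x + 2 * (l - x) * P * P - (l - x) * P * x) / (r * r)"
      using rpos by (simp add: field_simps)
    also have "\<dots> = l"
    proof -
      have "P * P * x + 2 * (l - x) * P * P - (l - x) * P * x = l * (2 * l * P)" unfolding P_def by (simp add: algebra_simps)
      moreover have "2 * l * P \<noteq> 0" using l0 P0 by simp
      ultimately show ?thesis unfolding r2 by simp
    qed
    finally show "cnj a * (of_real x * a + y * b) + cnj b * (cnj y * a - of_real x * b) = of_real l" by simp
  qed
next
  case False
  hence x: "x = - l" using xl by linarith
  hence "(cmod y)^2 = 0" using xy by simp
  hence y: "y = 0" by simp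
  show ?thesis by (rule exI[of _ 0], rule exI[of _ 1]) (simp add: x y)
qed



lemma dm2[simp]: "(2*i+1) div 2 = (i::nat)" "(2*i+1) mod 2 = (1::nat)" "(2*i) div 2 = (i::nat)" "(2*i) mod 2 = (0::nat)"
  "Suc (i*2) div 2 = i" "Suc (i*2) mod 2 = 1" "(i*2) div 2 = i" "(i*2) mod 2 = 0"
  by presburger+

lemma split_sum: "(\<Sum>r\<in>{0..<(k::nat)*2}. (g::nat\<Rightarrow>complex) r) = (\<Sum>i<k. g (2*i) + (g (2*i+1) :: complex))"
  by (induction k) (simp_all add: algebra_simps)

lemma split_sum2: "(\<Sum>r\<in>{0..<(k::nat)*2}. \<Sum>c\<in>{0..<k*2}. G r c) =
  (\<Sum>i<k. \<Sum>i'<k. G (2*i) (2*i') + G (2*i) (2*i'+1) + G (2*i+1) (2*i') + (G (2*i+1) (2*i'+1) :: complex))"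
  by (simp add: split_sum sum.distrib algebra_simps)

lemma braket_mulv: "v \<in> carrier_vec n \<Longrightarrow> X \<in> carrier_mat n n \<Longrightarrow>
   braket v (X *\<^sub>v v) = (\<Sum>r\<in>{0..<n}. \<Sum>c\<in>{0..<n}. X$$(r,c) * v$c * cnj (v$r))"
  unfolding braket_def scalar_prod_def by (simp add: sum_distrib_right scalar_prod_def)

lemma block2_carrier[simp]: "block2 M i j \<in> carrier_mat 2 2" unfolding block2_def by auto
lemma block2_dim[simp]: "dim_row (block2 M i j) = 2" "dim_col (block2 M i j) = 2" unfolding block2_def by auto
lemma block2_idx[simp]: "a < 2 \<Longrightarrow> b < 2 \<Longrightarrow> block2 M i j $$ (a,b) = M $$ (2*i+a, 2*j+b)"
  unfolding block2_def by auto

lemma id_tensor_idx: "r < k*2 \<Longrightarrow> c < k*2 \<Longrightarrow>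
  id_tensor k \<Psi> M $$ (r,c) = \<Psi> (block2 M (r div 2) (c div 2)) $$ (r mod 2, c mod 2)"
  unfolding id_tensor_def by simp
lemma id_tensor_carrier[simp]: "id_tensor k \<Psi> M \<in> carrier_mat (k*2) (k*2)"
  unfolding id_tensor_def by simp

lemma id_tensor_dim[simp]: "dim_row (id_tensor k \<Psi> M) = k*2" "dim_col (id_tensor k \<Psi> M) = k*2"
  unfolding id_tensor_def by simp_all

definition mp :: "complex vec \<Rightarrow> complex vec \<Rightarrow> complex mat \<Rightarrow> complex mat" where
  "mp a b B = mat 2 2 (\<lambda>(i,j). sandwich a B a * (b$i * cnj (b$j)))"

lemma mp_carrier[simp]: "mp a b B \<in> carrier_mat 2 2" unfolding mp_def by auto
lemma mp_dim[simp]: "dim_row (mp a b B) = 2" "dim_col (mp a b B) = 2" unfolding mp_def by auto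
lemma mp_idx: "i < 2 \<Longrightarrow> j < 2 \<Longrightarrow> mp a b B $$ (i,j) = sandwich a B a * (b$i * cnj (b$j))"
  unfolding mp_def by auto

definition SS :: "complex vec \<Rightarrow> complex mat \<Rightarrow> nat \<Rightarrow> nat \<Rightarrow> complex" where
  "SS a M i i' = cnj (a$0) * (M$$(2*i,2*i') * a$0 + M$$(2*i,2*i'+1) * a$1) + cnj (a$1) * (M$$(2*i+1,2*i') * a$0 + M$$(2*i+1,2*i'+1) * a$1)"

lemma sandwich_block2: "a \<in> carrier_vec 2 \<Longrightarrow> sandwich a (block2 M i i') a = SS a M i i'"
  by (simp add: sandwich2 SS_def)

lemma R_form:
  assumes M: "M \<in> carrier_mat (k*2) (k*2)" and a: "a \<in> carrier_vec 2"
  shows "braket (vec (k*2) (\<lambda>m. a$(m mod 2) * g (m div 2))) (M *\<^sub>v vec (k*2) (\<lambda>m. a$(m mod 2) * g (m div 2)))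
     = (\<Sum>i<k. \<Sum>i'<k. SS a M i i' * cnj (g i) * g i')"
proof -
  let ?w = "vec (k*2) (\<lambda>m. a$(m mod 2) * g (m div 2))"
  have "braket ?w (M *\<^sub>v ?w) = (\<Sum>r\<in>{0..<k*2}. \<Sum>c\<in>{0..<k*2}. M$$(r,c) * ?w$c * cnj (?w$r))"
    by (rule braket_mulv) (use M in auto)
  also have "\<dots> = (\<Sum>i<k. \<Sum>i'<k. SS a M i i' * cnj (g i) * g i')"
    unfolding split_sum2
  proof (intro sum.cong refl)
    fix i i' assume "i \<in> {..<k}" "i' \<in> {..<k}"
    hence "i < k" "i' < k" by auto
    hence "2*i < k*2" "2*i+1 < k*2" "2*i' < k*2" "2*i'+1 < k*2" by auto
    thus "M$$(2*i,2*i') * ?w$(2*i') * cnj (?w$(2*i)) + M$$(2*i,2*i'+1) * ?w$(2*i'+1) * cnj (?w$(2*i))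
        + M$$(2*i+1,2*i') * ?w$(2*i') * cnj (?w$(2*i+1)) + M$$(2*i+1,2*i'+1) * ?w$(2*i'+1) * cnj (?w$(2*i+1))
        = SS a M i i' * cnj (g i) * g i'"
      by (simp add: SS_def algebra_simps)
  qed
  finally show ?thesis .
qed

lemma L_form:
  assumes M: "M \<in> carrier_mat (k*2) (k*2)" and a: "a \<in> carrier_vec 2" and b: "b \<in> carrier_vec 2"
    and v: "v \<in> carrier_vec (k*2)"
  shows "braket v (id_tensor k (mp a b) M *\<^sub>v v)
     = (\<Sum>i<k. \<Sum>i'<k. SS a M i i' * cnj (cnj (b$0) * v$(2*i) + cnj (b$1) * v$(2*i+1)) * (cnj (b$0) * v$(2*i') + cnj (b$1) * v$(2*i'+1)))"
proof -
  let ?X = "id_tensor k (mp a b) M"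
  have "braket v (?X *\<^sub>v v) = (\<Sum>r\<in>{0..<k*2}. \<Sum>c\<in>{0..<k*2}. ?X$$(r,c) * v$c * cnj (v$r))"
    by (rule braket_mulv) (use v in auto)
  also have "\<dots> = (\<Sum>i<k. \<Sum>i'<k. SS a M i i' * cnj (cnj (b$0) * v$(2*i) + cnj (b$1) * v$(2*i+1)) * (cnj (b$0) * v$(2*i') + cnj (b$1) * v$(2*i'+1)))"
    unfolding split_sum2
  proof (intro sum.cong refl)
    fix i i' assume "i \<in> {..<k}" "i' \<in> {..<k}"
    hence "i < k" "i' < k" by auto
    hence "2*i < k*2" "2*i+1 < k*2" "2*i' < k*2" "2*i'+1 < k*2" by auto
    thus "?X$$(2*i,2*i') * v$(2*i') * cnj (v$(2*i)) + ?X$$(2*i,2*i'+1) * v$(2*i'+1) * cnj (v$(2*i)) + ?X$$(2*i+1,2*i') * v$(2*i') * cnj (v$(2*i+1)) + ?X$$(2*i+1,2*i'+1) * v$(2*i'+1) * cnj (v$(2*i+1)) = SS a M i i' * cnj (cnj (b$0) * v$(2*i) + cnj (b$1) * v$(2*i+1)) * (cnj (b$0) * v$(2*i') + cnj (b$1) * v$(2*i'+1))"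
      by (simp add: id_tensor_idx mp_idx sandwich_block2 a algebra_simps)
  qed
  finally show ?thesis .
qed


lemma cp_mp:
  assumes a: "a \<in> carrier_vec 2" and b: "b \<in> carrier_vec 2" and M: "psd (k*2) M"
  shows "psd (k*2) (id_tensor k (mp a b) M)"
  unfolding psd_def
proof (intro conjI ballI id_tensor_carrier)
  fix v :: "complex vec" assume v: "v \<in> carrier_vec (k*2)"
  have Mc: "M \<in> carrier_mat (k*2) (k*2)" using M unfolding psd_def by auto
  define g where "g i = cnj (b$0) * v$(2*i) + cnj (b$1) * v$(2*i+1)" for i
  define w where "w = vec (k*2) (\<lambda>m. a$(m mod 2) * g (m div 2))"
  have 1: "braket v (id_tensor k (mp a b) M *\<^sub>v v) = (\<Sum>i<k. \<Sum>i'<k. SS a M i i' * cnj (g i) * g i')"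
    unfolding L_form[OF Mc a b v] g_def ..
  have 2: "braket w (M *\<^sub>v w) = (\<Sum>i<k. \<Sum>i'<k. SS a M i i' * cnj (g i) * g i')"
    unfolding w_def by (rule R_form[OF Mc a, of g])
  have "braket v (id_tensor k (mp a b) M *\<^sub>v v) = braket w (M *\<^sub>v w)" unfolding 1 2 ..
  also have "0 \<le> braket w (M *\<^sub>v w)" using M unfolding psd_def w_def by auto
  finally show "0 \<le> braket v (id_tensor k (mp a b) M *\<^sub>v v)" .
qed

lemma psd_add:
  assumes A: "psd n A" and B: "psd n B" shows "psd n (A + B)"
  unfolding psd_def
proof (intro conjI ballI)
  show "A + B \<in> carrier_mat n n" using A B unfolding psd_def by auto
  fix v :: "complex vec" assume v: "v \<in> carrier_vec n"
  have Ac: "A \<in> carrier_mat n n" and Bc: "B \<in> carrier_mat n n" using A B unfolding psd_def by auto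
  have "braket v ((A + B) *\<^sub>v v) = braket v (A *\<^sub>v v) + braket v (B *\<^sub>v v)"
    unfolding braket_def using Ac Bc v
    by (simp add: add_mult_distrib_mat_vec add_scalar_prod_distrib[of _ n])
  moreover have "0 \<le> braket v (A *\<^sub>v v)" "0 \<le> braket v (B *\<^sub>v v)" using A B v unfolding psd_def by auto
  ultimately show "0 \<le> braket v ((A + B) *\<^sub>v v)" by simp
qed

definition chan0 :: "complex vec \<Rightarrow> complex vec \<Rightarrow> complex vec \<Rightarrow> complex vec \<Rightarrow> complex mat \<Rightarrow> complex mat" where
  "chan0 p e q f B = mp p e B + mp q f B"

lemma chan0_carrier[simp]: "chan0 p e q f B \<in> carrier_mat 2 2" unfolding chan0_def by simp

lemma id_tensor_chan0: "id_tensor k (chan0 p e q f) M = id_tensor k (mp p e) M + id_tensor k (mp q f) M"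
  by (rule eq_matI) (auto simp: id_tensor_idx chan0_def)

lemma cp_chan0:
  assumes "p \<in> carrier_vec 2" "e \<in> carrier_vec 2" "q \<in> carrier_vec 2" "f \<in> carrier_vec 2"
  shows "completely_positive (chan0 p e q f)"
  unfolding completely_positive_def id_tensor_chan0 using assms by (auto intro!: psd_add cp_mp)

definition sig :: "complex vec \<Rightarrow> complex mat \<Rightarrow> complex mat" where
  "sig a M = mat 2 2 (\<lambda>(i,j). SS a M i j)"

lemma sig_carrier[simp]: "sig a M \<in> carrier_mat 2 2" unfolding sig_def by auto
lemma sig_dim[simp]: "dim_row (sig a M) = 2" "dim_col (sig a M) = 2" unfolding sig_def by auto
lemma sig_idx: "i < 2 \<Longrightarrow> j < 2 \<Longrightarrow> sig a M $$ (i,j) = SS a M i j" unfolding sig_def by auto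

lemma sig_psd:
  assumes a: "a \<in> carrier_vec 2" and M: "psd 4 M"
  shows "psd 2 (sig a M)"
  unfolding psd_def
proof (intro conjI ballI sig_carrier)
  fix u :: "complex vec" assume u: "u \<in> carrier_vec 2"
  have Mc: "M \<in> carrier_mat (2*2) (2*2)" using M unfolding psd_def by auto
  define w where "w = vec (2*2) (\<lambda>m. a$(m mod 2) * u$(m div 2))"
  have "braket u (sig a M *\<^sub>v u) = (\<Sum>i<2. \<Sum>i'<2. SS a M i i' * cnj (u$i) * u$i')"
    using u by (simp add: braket2 mulv2 sum2 sig_idx algebra_simps)
  also have "\<dots> = braket w (M *\<^sub>v w)" unfolding w_def by (rule R_form[OF Mc a, of "\<lambda>i. u$i", symmetric])
  also have "0 \<le> braket w (M *\<^sub>v w)" using M unfolding psd_def w_def by auto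
  finally show "0 \<le> braket u (sig a M *\<^sub>v u)" .
qed


lemma psd2_quad: "psd 2 \<sigma> \<Longrightarrow> 0 \<le> cnj a * (\<sigma>$$(0,0) * a + \<sigma>$$(0,1) * b) + cnj b * (\<sigma>$$(1,0) * a + \<sigma>$$(1,1) * b)"
proof -
  assume s: "psd 2 \<sigma>"
  hence "0 \<le> braket (v2 a b) (\<sigma> *\<^sub>v v2 a b)" unfolding psd_def by auto
  moreover have "\<sigma> \<in> carrier_mat 2 2" using s unfolding psd_def by auto
  ultimately show ?thesis by (simp add: braket2 mulv2)
qed

lemma psd2_diag: "psd 2 \<sigma> \<Longrightarrow> 0 \<le> \<sigma>$$(0,0) \<and> 0 \<le> \<sigma>$$(1,1)"
  using psd2_quad[of \<sigma> 1 0] psd2_quad[of \<sigma> 0 1] by simp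

lemma cplx_antisym: "0 \<le> (s::complex) \<Longrightarrow> 0 \<le> - s \<Longrightarrow> s = 0"
  by (simp add: less_eq_complex_def complex_eq_iff)

lemma psd2_zero:
  assumes s: "psd 2 \<sigma>" and t: "\<sigma>$$(0,0) + \<sigma>$$(1,1) = 0"
  shows "\<sigma>$$(0,0) = 0" "\<sigma>$$(1,1) = 0" "\<sigma>$$(0,1) = 0" "\<sigma>$$(1,0) = 0"
proof -
  have d: "0 \<le> \<sigma>$$(0,0)" "0 \<le> \<sigma>$$(1,1)" using psd2_diag[OF s] by auto
  have "\<sigma>$$(1,1) = - \<sigma>$$(0,0)" using t by (simp add: eq_neg_iff_add_eq_0 add.commute)
  hence z0: "\<sigma>$$(0,0) = 0" using d cplx_antisym by metis
  thus z1: "\<sigma>$$(1,1) = 0" using t by simp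
  show "\<sigma>$$(0,0) = 0" by (rule z0)
  have h: "0 \<le> \<sigma>$$(0,1) * z + cnj z * \<sigma>$$(1,0)" for z
    using psd2_quad[OF s, of 1 z] z0 z1 by simp
  have "0 \<le> \<sigma>$$(0,1) + \<sigma>$$(1,0)" using h[of 1] by simp
  moreover have "0 \<le> - (\<sigma>$$(0,1) + \<sigma>$$(1,0))" using h[of "-1"] by simp
  ultimately have s1: "\<sigma>$$(0,1) + \<sigma>$$(1,0) = 0" by (rule cplx_antisym)
  have "0 \<le> \<i> * (\<sigma>$$(0,1) - \<sigma>$$(1,0))" using h[of \<i>] by (simp add: algebra_simps)
  moreover have "0 \<le> - (\<i> * (\<sigma>$$(0,1) - \<sigma>$$(1,0)))" using h[of "-\<i>"] by (simp add: algebra_simps)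
  ultimately have "\<i> * (\<sigma>$$(0,1) - \<sigma>$$(1,0)) = 0" by (rule cplx_antisym)
  hence s2: "\<sigma>$$(0,1) = \<sigma>$$(1,0)" by simp
  show "\<sigma>$$(0,1) = 0" "\<sigma>$$(1,0) = 0" using s1 s2 by auto
qed

lemma ketbra_psd: "v \<in> carrier_vec 2 \<Longrightarrow> psd 2 (ketbra v v)"
  unfolding psd_def
proof (intro conjI ballI ketbra_carrier, assumption)
  fix u :: "complex vec" assume v: "v \<in> carrier_vec 2" and u: "u \<in> carrier_vec 2"
  define z where "z = cnj (u$0) * v$0 + cnj (u$1) * v$1"
  have "braket u (ketbra v v *\<^sub>v u) = z * cnj z"
    using u v ketbra_carrier[OF v v] unfolding z_def by (simp add: braket2 mulv2 ketbra_idx algebra_simps)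
  also have "\<dots> = of_real ((cmod z)^2)" by (simp add: nsq)
  also have "0 \<le> \<dots>" by (simp add: less_eq_complex_def)
  finally show "0 \<le> braket u (ketbra v v *\<^sub>v u)" .
qed

lemma ketbra_density: "unit_vec2 v \<Longrightarrow> density 2 (ketbra v v)"
  unfolding density_def using ketbra_psd ketbra_self_trace unit2 by blast


lemma sep_term:
  assumes a: "a \<in> carrier_vec 2" and b: "unit_vec2 b" and r: "psd 4 \<rho>"
  defines "t \<equiv> sig a \<rho> $$ (0,0) + sig a \<rho> $$ (1,1)"
  defines "A \<equiv> (if t = 0 then ketbra b b else (1/t) \<cdot>\<^sub>m sig a \<rho>)"
  shows "density 2 A"
    and "0 \<le> Re t"
    and "\<And>i j. i < 2 \<Longrightarrow> j < 2 \<Longrightarrow> of_real (Re t) * A $$ (i,j) = sig a \<rho> $$ (i,j)"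
proof -
  let ?s = "sig a \<rho>"
  have sp: "psd 2 ?s" using sig_psd[OF a] r by (simp add: numeral_eq_Suc)
  have d: "0 \<le> ?s$$(0,0)" "0 \<le> ?s$$(1,1)" using psd2_diag[OF sp] by auto
  have t0: "0 \<le> t" unfolding t_def using d by (rule add_nonneg_nonneg)
  hence tr: "t = of_real (Re t)" and tR: "0 \<le> Re t" by (auto simp: less_eq_complex_def complex_eq_iff)
  show "0 \<le> Re t" by (rule tR)
  show "density 2 A"
  proof (cases "t = 0")
    case True thus ?thesis using ketbra_density[OF b] by (simp add: A_def)
  next
    case False
    hence tp: "Re t > 0" using tR tr by (metis less_eq_real_def of_real_0)
    have it: "1/t = complex_of_real (1 / Re t)" using tr by (metis of_real_1 of_real_divide)
    have inv: "0 \<le> 1 / t" unfolding it using tp by (simp add: less_eq_complex_def)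
    have "psd 2 ((1/t) \<cdot>\<^sub>m ?s)"
      unfolding psd_def
    proof (intro conjI ballI)
      show "(1/t) \<cdot>\<^sub>m ?s \<in> carrier_mat 2 2" by simp
      fix u :: "complex vec" assume u: "u \<in> carrier_vec 2"
      have "braket u (((1/t) \<cdot>\<^sub>m ?s) *\<^sub>v u) = (1/t) * braket u (?s *\<^sub>v u)"
        using u by (simp add: braket2 mulv2 algebra_simps)
      also have "0 \<le> \<dots>"
      proof -
        have "0 \<le> braket u (?s *\<^sub>v u)" using sp u unfolding psd_def by auto
        thus ?thesis using inv by (rule mult_nonneg_nonneg[rotated])
      qed
      finally show "0 \<le> braket u (((1/t) \<cdot>\<^sub>m ?s) *\<^sub>v u)" .
    qed
    moreover have "mtrace ((1/t) \<cdot>\<^sub>m ?s) = 1"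
    proof -
      have "mtrace ((1/t) \<cdot>\<^sub>m ?s) = (1/t) * t" unfolding t_def by (simp add: mtrace2 distrib_left)
      thus ?thesis using False by simp
    qed
    ultimately show ?thesis using False unfolding density_def A_def by simp
  qed
  fix i j :: nat assume ij: "i < 2" "j < 2"
  show "of_real (Re t) * A $$ (i,j) = ?s $$ (i,j)"
  proof (cases "t = 0")
    case True
    have z: "?s$$(0,0) = 0" "?s$$(1,1) = 0" "?s$$(0,1) = 0" "?s$$(1,0) = 0"
      using psd2_zero[OF sp] True unfolding t_def by auto
    have "?s $$ (i,j) = 0" using ij z by (auto dest!: less2)
    thus ?thesis using True by (simp add: A_def)
  next
    case False
    have "of_real (Re t) * A $$ (i,j) = t * ((1/t) * ?s $$ (i,j))" using False ij tr by (simp add: A_def)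
    also have "\<dots> = ?s $$ (i,j)" using False by simp
    finally show ?thesis .
  qed
qed


lemma sum4: "(\<Sum>i<4. (g::nat\<Rightarrow>complex) i) = g 0 + g 1 + g 2 + g 3"
  by (simp add: numeral_eq_Suc)

lemma kron2_idx: "r < 4 \<Longrightarrow> c < 4 \<Longrightarrow> kron2 A B $$ (r,c) = A $$ (r div 2, c div 2) * B $$ (r mod 2, c mod 2)"
  unfolding kron2_def by simp

lemma chan0_tensor_idx:
  assumes "p \<in> carrier_vec 2" "q \<in> carrier_vec 2" and rc: "r < 4" "c < 4"
  shows "id_tensor 2 (chan0 p e q f) \<rho> $$ (r,c) =
     sig p \<rho> $$ (r div 2, c div 2) * (e$(r mod 2) * cnj (e$(c mod 2))) +
     sig q \<rho> $$ (r div 2, c div 2) * (f$(r mod 2) * cnj (f$(c mod 2)))"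
proof -
  have d: "r div 2 < 2" "c div 2 < 2" "r mod 2 < 2" "c mod 2 < 2" using rc by auto
  show ?thesis using rc d assms
    by (simp add: id_tensor_idx chan0_def mp_idx sandwich_block2 sig_idx)
qed

lemma trace_blocks:
  assumes p: "unit_vec2 p" and q: "unit_vec2 q" and pq: "braket p q = 0" and rc: "\<rho> \<in> carrier_mat 4 4"
  shows "(sig p \<rho> $$ (0,0) + sig p \<rho> $$ (1,1)) + (sig q \<rho> $$ (0,0) + sig q \<rho> $$ (1,1)) = mtrace \<rho>"
proof -
  have pc: "p \<in> carrier_vec 2" and qc: "q \<in> carrier_vec 2" using p q unit2 by auto
  have b: "sig p \<rho> $$ (i,i) + sig q \<rho> $$ (i,i) = \<rho> $$ (2*i, 2*i) + \<rho> $$ (2*i+1, 2*i+1)" if "i < 2" for i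
  proof -
    have "sig p \<rho> $$ (i,i) + sig q \<rho> $$ (i,i) = sandwich p (block2 \<rho> i i) p + sandwich q (block2 \<rho> i i) q"
      using that pc qc by (simp add: sig_idx sandwich_block2)
    also have "\<dots> = mtrace (block2 \<rho> i i)" by (rule sandwich_complete[OF p q pq block2_carrier])
    also have "\<dots> = \<rho> $$ (2*i, 2*i) + \<rho> $$ (2*i+1, 2*i+1)" by (simp add: mtrace2)
    finally show ?thesis .
  qed
  have "mtrace \<rho> = \<rho>$$(0,0) + \<rho>$$(1,1) + \<rho>$$(2,2) + \<rho>$$(3,3)"
    unfolding mtrace_def using rc by (simp add: sum4)
  moreover have "\<rho>$$(0,0) + \<rho>$$(1,1) = sig p \<rho> $$ (0,0) + sig q \<rho> $$ (0,0)" using b[of 0] by simp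
  moreover have "\<rho>$$(2,2) + \<rho>$$(3,3) = sig p \<rho> $$ (1,1) + sig q \<rho> $$ (1,1)" using b[of 1] by (simp add: numeral_3_eq_3)
  ultimately show ?thesis by (simp add: algebra_simps)
qed

lemma eb_chan0:
  assumes p: "unit_vec2 p" and q: "unit_vec2 q" and pq: "braket p q = 0"
    and e: "unit_vec2 e" and f: "unit_vec2 f"
    and r: "density 4 \<rho>"
  shows "separable (id_tensor 2 (chan0 p e q f) \<rho>)"
proof -
  have rp: "psd 4 \<rho>" and rt: "mtrace \<rho> = 1" using r unfolding density_def by auto
  have rc: "\<rho> \<in> carrier_mat 4 4" using rp unfolding psd_def by auto
  have pc: "p \<in> carrier_vec 2" and qc: "q \<in> carrier_vec 2" and ec: "e \<in> carrier_vec 2" and fc: "f \<in> carrier_vec 2"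
    using p q e f unit2 by auto
  define t0 where "t0 = sig p \<rho> $$ (0,0) + sig p \<rho> $$ (1,1)"
  define t1 where "t1 = sig q \<rho> $$ (0,0) + sig q \<rho> $$ (1,1)"
  define A0 where "A0 = (if t0 = 0 then ketbra e e else (1/t0) \<cdot>\<^sub>m sig p \<rho>)"
  define A1 where "A1 = (if t1 = 0 then ketbra f f else (1/t1) \<cdot>\<^sub>m sig q \<rho>)"
  note S0 = sep_term[OF pc e rp, folded t0_def, folded A0_def]
  note S1 = sep_term[OF qc f rp, folded t1_def, folded A1_def]
  have tsum: "Re t0 + Re t1 = 1"
  proof -
    have "t0 + t1 = 1" unfolding t0_def t1_def using trace_blocks[OF p q pq rc] rt by simp
    hence "Re (t0 + t1) = 1" by simp
    thus ?thesis by simp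
  qed
  show ?thesis
    unfolding separable_def
  proof (intro exI conjI allI impI)
    let ?p = "\<lambda>x::nat. if x = 0 then Re t0 else Re t1"
    let ?A = "\<lambda>x::nat. if x = 0 then A0 else A1"
    let ?B = "\<lambda>x::nat. if x = 0 then ketbra e e else ketbra f f"
    fix x :: nat assume "x < 2"
    show "0 \<le> ?p x" "density 2 (?A x)" "density 2 (?B x)"
      using S0 S1 ketbra_density[OF e] ketbra_density[OF f] by auto
  next
    show "(\<Sum>x<2. (\<lambda>x::nat. if x = 0 then Re t0 else Re t1) x) = 1" using tsum by (simp add: sum2)
  next
    show "id_tensor 2 (chan0 p e q f) \<rho> = mat 4 4 (\<lambda>(i,j). \<Sum>x<2. complex_of_real ((\<lambda>x::nat. if x = 0 then Re t0 else Re t1) x) *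
        kron2 ((\<lambda>x::nat. if x = 0 then A0 else A1) x) ((\<lambda>x::nat. if x = 0 then ketbra e e else ketbra f f) x) $$ (i,j))"
    proof (rule eq_matI)
      fix i j assume "i < dim_row (mat 4 4 (\<lambda>(i,j). \<Sum>x<2. complex_of_real ((\<lambda>x::nat. if x = 0 then Re t0 else Re t1) x) *
        kron2 ((\<lambda>x::nat. if x = 0 then A0 else A1) x) ((\<lambda>x::nat. if x = 0 then ketbra e e else ketbra f f) x) $$ (i,j)))"
        "j < dim_col (mat 4 4 (\<lambda>(i,j). \<Sum>x<2. complex_of_real ((\<lambda>x::nat. if x = 0 then Re t0 else Re t1) x) *
        kron2 ((\<lambda>x::nat. if x = 0 then A0 else A1) x) ((\<lambda>x::nat. if x = 0 then ketbra e e else ketbra f f) x) $$ (i,j)))"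
      hence ij: "i < 4" "j < 4" by auto
      have d: "i div 2 < 2" "j div 2 < 2" "i mod 2 < 2" "j mod 2 < 2" using ij by auto
      have "(mat 4 4 (\<lambda>(i,j). \<Sum>x<2. complex_of_real ((\<lambda>x::nat. if x = 0 then Re t0 else Re t1) x) *
        kron2 ((\<lambda>x::nat. if x = 0 then A0 else A1) x) ((\<lambda>x::nat. if x = 0 then ketbra e e else ketbra f f) x) $$ (i,j))) $$ (i,j)
        = (complex_of_real (Re t0) * A0 $$ (i div 2, j div 2)) * ketbra e e $$ (i mod 2, j mod 2)
        + (complex_of_real (Re t1) * A1 $$ (i div 2, j div 2)) * ketbra f f $$ (i mod 2, j mod 2)"
        using ij by (simp add: sum2 kron2_idx mult.assoc)
      also have "\<dots> = sig p \<rho> $$ (i div 2, j div 2) * (e$(i mod 2) * cnj (e$(j mod 2))) +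
         sig q \<rho> $$ (i div 2, j div 2) * (f$(i mod 2) * cnj (f$(j mod 2)))"
        using S0(3)[OF d(1,2)] S1(3)[OF d(1,2)] d ec fc by (simp add: ketbra_idx)
      also have "\<dots> = id_tensor 2 (chan0 p e q f) \<rho> $$ (i,j)"
        by (rule chan0_tensor_idx[OF pc qc ij, symmetric])
      finally show "id_tensor 2 (chan0 p e q f) \<rho> $$ (i,j) = (mat 4 4 (\<lambda>(i,j). \<Sum>x<2. complex_of_real ((\<lambda>x::nat. if x = 0 then Re t0 else Re t1) x) *
        kron2 ((\<lambda>x::nat. if x = 0 then A0 else A1) x) ((\<lambda>x::nat. if x = 0 then ketbra e e else ketbra f f) x) $$ (i,j))) $$ (i,j)" by simp
    qed auto
  qed
qed


lemma sandwich_smult: "u \<in> carrier_vec 2 \<Longrightarrow> A \<in> carrier_mat 2 2 \<Longrightarrow> sandwich u (c \<cdot>\<^sub>m A) u = c * sandwich u A u"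
  by (simp add: sandwich2 algebra_simps)

lemma chan0_idx: "i < 2 \<Longrightarrow> j < 2 \<Longrightarrow> chan0 p e q f A $$ (i,j) =
   sandwich p A p * (e$i * cnj (e$j)) + sandwich q A q * (f$i * cnj (f$j))"
  by (simp add: chan0_def mp_idx)

lemma chan0_dim[simp]: "dim_row (chan0 p e q f A) = 2" "dim_col (chan0 p e q f A) = 2"
  by (simp_all add: chan0_def)

lemma chan0_channel:
  assumes p: "unit_vec2 p" and q: "unit_vec2 q" and pq: "braket p q = 0"
    and e: "unit_vec2 e" and f: "unit_vec2 f" and ef: "braket e f = 0"
  shows "chan0 p e q f \<in> channels" "chan0 p e q f (1\<^sub>m 2) = 1\<^sub>m 2"
proof -
  have pc: "p \<in> carrier_vec 2" and qc: "q \<in> carrier_vec 2" and ec: "e \<in> carrier_vec 2" and fc: "f \<in> carrier_vec 2"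
    and p1: "p$0 * cnj (p$0) + p$1 * cnj (p$1) = 1" and q1: "q$0 * cnj (q$0) + q$1 * cnj (q$1) = 1"
    and e1: "e$0 * cnj (e$0) + e$1 * cnj (e$1) = 1" and f1: "f$0 * cnj (f$0) + f$1 * cnj (f$1) = 1"
    using p q e f unit2 by auto
  have lin: "linear_map2 (chan0 p e q f)"
    unfolding linear_map2_def
  proof (intro conjI ballI allI)
    fix A B :: "complex mat" assume A: "A \<in> carrier_mat 2 2" and B: "B \<in> carrier_mat 2 2"
    show "chan0 p e q f (A + B) = chan0 p e q f A + chan0 p e q f B"
    proof (rule eq_matI)
      fix i j assume "i < dim_row (chan0 p e q f A + chan0 p e q f B)" "j < dim_col (chan0 p e q f A + chan0 p e q f B)"
      hence ij: "i < 2" "j < 2" by simp_all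
      thus "chan0 p e q f (A + B) $$ (i,j) = (chan0 p e q f A + chan0 p e q f B) $$ (i,j)"
        by (simp add: chan0_idx sandwich_add[OF pc A B] sandwich_add[OF qc A B] distrib_right)
    qed simp_all
  next
    fix A :: "complex mat" and c :: complex assume A: "A \<in> carrier_mat 2 2"
    show "chan0 p e q f (c \<cdot>\<^sub>m A) = c \<cdot>\<^sub>m chan0 p e q f A"
    proof (rule eq_matI)
      fix i j assume "i < dim_row (c \<cdot>\<^sub>m chan0 p e q f A)" "j < dim_col (c \<cdot>\<^sub>m chan0 p e q f A)"
      hence ij: "i < 2" "j < 2" by simp_all
      thus "chan0 p e q f (c \<cdot>\<^sub>m A) $$ (i,j) = (c \<cdot>\<^sub>m chan0 p e q f A) $$ (i,j)"
        by (simp add: chan0_idx sandwich_smult[OF pc A] sandwich_smult[OF qc A] distrib_left mult.assoc)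
    qed simp_all
  qed simp
  have tp: "trace_preserving (chan0 p e q f)"
    unfolding trace_preserving_def
  proof
    fix A :: "complex mat" assume A: "A \<in> carrier_mat 2 2"
    have "mtrace (chan0 p e q f A) = sandwich p A p * (e$0 * cnj (e$0) + e$1 * cnj (e$1)) + sandwich q A q * (f$0 * cnj (f$0) + f$1 * cnj (f$1))"
      by (simp add: mtrace2[OF chan0_carrier] chan0_idx algebra_simps)
    also have "\<dots> = mtrace A" using sandwich_complete[OF p q pq A] e1 f1 by simp
    finally show "mtrace (chan0 p e q f A) = mtrace A" .
  qed
  show "chan0 p e q f \<in> channels" unfolding channels_def using lin tp cp_chan0[OF pc ec qc fc] by simp
  have sp: "sandwich p (1\<^sub>m 2) p = 1" using pc p1 by (simp add: sandwich2 mult.commute)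
  have sq: "sandwich q (1\<^sub>m 2) q = 1" using qc q1 by (simp add: sandwich2 mult.commute)
  note c = complete2[OF e f ef]
  show "chan0 p e q f (1\<^sub>m 2) = 1\<^sub>m 2"
  proof (rule eq_matI)
    fix i j assume "i < dim_row (1\<^sub>m 2 :: complex mat)" "j < dim_col (1\<^sub>m 2 :: complex mat)"
    hence ij: "i < 2" "j < 2" by simp_all
    have "chan0 p e q f (1\<^sub>m 2) $$ (i,j) = e$i * cnj (e$j) + f$i * cnj (f$j)"
      using ij by (simp add: chan0_idx sp sq)
    also have "\<dots> = (1\<^sub>m 2 :: complex mat) $$ (i,j)"
    proof -
      have "i = 0 \<or> i = 1" "j = 0 \<or> j = 1" using ij by auto
      thus ?thesis using c by (elim disjE) simp_all
    qed
    finally show "chan0 p e q f (1\<^sub>m 2) $$ (i,j) = (1\<^sub>m 2 :: complex mat) $$ (i,j)" .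
  qed simp_all
qed

lemma sandwich_mp: "u \<in> carrier_vec 2 \<Longrightarrow> b \<in> carrier_vec 2 \<Longrightarrow>
  sandwich u (mp a b X) u = sandwich a X a * (braket u b * cnj (braket u b))"
  by (simp add: sandwich2 mp_idx braket2 algebra_simps)


lemma adj_carrier: "A \<in> carrier_mat 2 2 \<Longrightarrow> mat_adjoint A \<in> carrier_mat 2 2"
  unfolding mat_adjoint_def by (simp add: mat_of_rows_def)

lemma adj_idx: "A \<in> carrier_mat 2 2 \<Longrightarrow> i < 2 \<Longrightarrow> j < 2 \<Longrightarrow> mat_adjoint A $$ (i,j) = cnj (A $$ (j,i))"
  unfolding mat_adjoint_def by (simp add: mat_of_rows_def)

lemma mult2_idx: "A \<in> carrier_mat 2 2 \<Longrightarrow> B \<in> carrier_mat 2 2 \<Longrightarrow> i < 2 \<Longrightarrow> j < 2 \<Longrightarrow>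
  (A * B) $$ (i,j) = A$$(i,0) * B$$(0,j) + A$$(i,1) * B$$(1,j)"
  by (simp add: scalar_prod_def sum2')

lemma conj_idx:
  assumes U: "U \<in> carrier_mat 2 2" and A: "A \<in> carrier_mat 2 2" and ij: "i < 2" "j < 2"
  shows "(U * A * mat_adjoint U) $$ (i,j) =
    U$$(i,0) * (A$$(0,0) * cnj (U$$(j,0)) + A$$(0,1) * cnj (U$$(j,1))) + U$$(i,1) * (A$$(1,0) * cnj (U$$(j,0)) + A$$(1,1) * cnj (U$$(j,1)))"
proof -
  have UA: "U * A \<in> carrier_mat 2 2" using U A by simp
  have aU: "mat_adjoint U \<in> carrier_mat 2 2" using adj_carrier[OF U] .
  have z: "(0::nat) < 2" "(1::nat) < 2" by auto
  show ?thesis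
    unfolding mult2_idx[OF UA aU ij] mult2_idx[OF U A ij(1) z(1)] mult2_idx[OF U A ij(1) z(2)]
      adj_idx[OF U z(1) ij(2)] adj_idx[OF U z(2) ij(2)]
    by (simp add: algebra_simps)
qed

definition Wm :: "complex vec \<Rightarrow> complex vec \<Rightarrow> complex vec \<Rightarrow> complex vec \<Rightarrow> complex \<Rightarrow> complex mat" where
  "Wm p e q f s = mat 2 2 (\<lambda>(i,j). e$i * cnj (p$j) + s * (f$i * cnj (q$j)))"

lemma Wm_carrier[simp]: "Wm p e q f s \<in> carrier_mat 2 2" unfolding Wm_def by auto
lemma Wm_dim[simp]: "dim_row (Wm p e q f s) = 2" "dim_col (Wm p e q f s) = 2" unfolding Wm_def by auto
lemma Wm_idx: "i < 2 \<Longrightarrow> j < 2 \<Longrightarrow> Wm p e q f s $$ (i,j) = e$i * cnj (p$j) + s * (f$i * cnj (q$j))"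
  unfolding Wm_def by auto

lemma ring_W:
  fixes ei Ej fi Fj P0 P1 Q0 Q1 p0 p1 q0 q1 A00 A01 A10 A11 s S :: complex
  shows "(ei*P0 + s*(fi*Q0)) * (A00*(Ej*p0 + S*(Fj*q0)) + A01*(Ej*p1 + S*(Fj*q1))) + (ei*P1 + s*(fi*Q1)) * (A10*(Ej*p0 + S*(Fj*q0)) + A11*(Ej*p1 + S*(Fj*q1)))
  = ei*Ej*(P0*(A00*p0 + A01*p1) + P1*(A10*p0 + A11*p1)) + s*S*(fi*Fj)*(Q0*(A00*q0 + A01*q1) + Q1*(A10*q0 + A11*q1))
    + S*(ei*Fj)*(P0*(A00*q0 + A01*q1) + P1*(A10*q0 + A11*q1)) + s*(fi*Ej)*(Q0*(A00*p0 + A01*p1) + Q1*(A10*p0 + A11*p1))"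
  by (simp add: algebra_simps)

lemma Wm_conj:
  assumes pc: "p \<in> carrier_vec 2" and qc: "q \<in> carrier_vec 2" and A: "A \<in> carrier_mat 2 2" and ij: "i < 2" "j < 2"
  shows "(Wm p e q f s * A * mat_adjoint (Wm p e q f s)) $$ (i,j) =
    e$i * cnj (e$j) * sandwich p A p + s * cnj s * (f$i * cnj (f$j)) * sandwich q A q
    + cnj s * (e$i * cnj (f$j)) * sandwich p A q + s * (f$i * cnj (e$j)) * sandwich q A p"
proof -
  have w: "Wm p e q f s $$ (i,0) = e$i * cnj (p$0) + s * (f$i * cnj (q$0))"
          "Wm p e q f s $$ (i,1) = e$i * cnj (p$1) + s * (f$i * cnj (q$1))"
          "cnj (Wm p e q f s $$ (j,0)) = cnj (e$j) * p$0 + cnj s * (cnj (f$j) * q$0)"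
          "cnj (Wm p e q f s $$ (j,1)) = cnj (e$j) * p$1 + cnj s * (cnj (f$j) * q$1)"
    using ij by (simp_all add: Wm_idx)
  show ?thesis
    unfolding conj_idx[OF Wm_carrier A ij] w ring_W sandwich2[OF pc qc A] sandwich2[OF qc pc A] sandwich2[OF pc pc A] sandwich2[OF qc qc A] ..
qed


lemma ring_U:
  fixes ei Ej fi Fj P0 P1 Q0 Q1 p0 p1 q0 q1 s S :: complex
  shows "(ei*P0 + s*(fi*Q0)) * (Ej*p0 + S*(Fj*q0)) + (ei*P1 + s*(fi*Q1)) * (Ej*p1 + S*(Fj*q1))
   = ei*Ej*(P0*p0 + P1*p1) + ei*S*Fj*(P0*q0 + P1*q1) + s*fi*Ej*(Q0*p0 + Q1*p1) + s*S*fi*Fj*(Q0*q0 + Q1*q1)"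
  by (simp add: algebra_simps)

lemma onb_facts:
  assumes p: "unit_vec2 p" and q: "unit_vec2 q" and pq: "braket p q = 0"
  shows "cnj (p$0) * p$0 + cnj (p$1) * p$1 = 1" "cnj (q$0) * q$0 + cnj (q$1) * q$1 = 1"
        "cnj (p$0) * q$0 + cnj (p$1) * q$1 = 0" "cnj (q$0) * p$0 + cnj (q$1) * p$1 = 0"
proof -
  have pc: "p \<in> carrier_vec 2" and qc: "q \<in> carrier_vec 2"
    and p1: "p$0 * cnj (p$0) + p$1 * cnj (p$1) = 1" and q1: "q$0 * cnj (q$0) + q$1 * cnj (q$1) = 1"
    using p q unit2 by auto
  show "cnj (p$0) * p$0 + cnj (p$1) * p$1 = 1" "cnj (q$0) * q$0 + cnj (q$1) * q$1 = 1"
    using p1 q1 by (simp_all add: mult.commute)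
  show a: "cnj (p$0) * q$0 + cnj (p$1) * q$1 = 0" using pq pc qc by (simp add: braket2)
  have "cnj (cnj (p$0) * q$0 + cnj (p$1) * q$1) = 0" using a by simp
  thus "cnj (q$0) * p$0 + cnj (q$1) * p$1 = 0" by (simp add: mult.commute)
qed

lemma Wm_unitary:
  assumes p: "unit_vec2 p" and q: "unit_vec2 q" and pq: "braket p q = 0"
    and e: "unit_vec2 e" and f: "unit_vec2 f" and ef: "braket e f = 0" and s: "s * cnj s = 1"
  shows "unitary2 (Wm p e q f s)"
  unfolding unitary2_def
proof (intro conjI Wm_carrier)
  note o = onb_facts[OF p q pq]
  note c = complete2[OF e f ef]
  have aW: "mat_adjoint (Wm p e q f s) \<in> carrier_mat 2 2" by (rule adj_carrier[OF Wm_carrier])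
  show "Wm p e q f s * mat_adjoint (Wm p e q f s) = 1\<^sub>m 2"
  proof (rule eq_matI)
    fix i j assume "i < dim_row (1\<^sub>m 2 :: complex mat)" "j < dim_col (1\<^sub>m 2 :: complex mat)"
    hence ij: "i < 2" "j < 2" by simp_all
    have z: "(0::nat) < 2" "(1::nat) < 2" by auto
    have w: "Wm p e q f s $$ (i,0) = e$i * cnj (p$0) + s * (f$i * cnj (q$0))"
          "Wm p e q f s $$ (i,1) = e$i * cnj (p$1) + s * (f$i * cnj (q$1))"
          "cnj (Wm p e q f s $$ (j,0)) = cnj (e$j) * p$0 + cnj s * (cnj (f$j) * q$0)"
          "cnj (Wm p e q f s $$ (j,1)) = cnj (e$j) * p$1 + cnj s * (cnj (f$j) * q$1)"
      using ij by (simp_all add: Wm_idx)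
    have "(Wm p e q f s * mat_adjoint (Wm p e q f s)) $$ (i,j) = e$i * cnj (e$j) + f$i * cnj (f$j)"
      unfolding mult2_idx[OF Wm_carrier aW ij] adj_idx[OF Wm_carrier z(1) ij(2)] adj_idx[OF Wm_carrier z(2) ij(2)]
        w ring_U o using s by simp
    also have "\<dots> = (1\<^sub>m 2 :: complex mat) $$ (i,j)"
    proof -
      have "i = 0 \<or> i = 1" "j = 0 \<or> j = 1" using ij by auto
      thus ?thesis using c by (elim disjE) simp_all
    qed
    finally show "(Wm p e q f s * mat_adjoint (Wm p e q f s)) $$ (i,j) = (1\<^sub>m 2 :: complex mat) $$ (i,j)" .
  qed (use aW in simp_all)
qed

lemma chan0_random_unitary:
  assumes p: "unit_vec2 p" and q: "unit_vec2 q" and pq: "braket p q = 0"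
    and e: "unit_vec2 e" and f: "unit_vec2 f" and ef: "braket e f = 0"
  shows "chan0 p e q f \<in> random_unitary"
proof -
  have pc: "p \<in> carrier_vec 2" and qc: "q \<in> carrier_vec 2" using p q unit2 by auto
  define U where "U x = Wm p e q f (if x = 0 then 1 else -1)" for x :: nat
  show ?thesis
    unfolding random_unitary_def
  proof (intro CollectI exI[of _ 2] exI[of _ "\<lambda>_. 1/2"] exI[of _ U] conjI allI impI ballI)
    fix x :: nat assume "x < 2"
    show "0 \<le> (1/2::real)" by simp
    show "unitary2 (U x)" unfolding U_def by (rule Wm_unitary[OF p q pq e f ef]) simp
  next
    show "(\<Sum>x<(2::nat). (\<lambda>_. 1/2::real) x) = 1" by (simp add: sum2)
  next
    fix A :: "complex mat" assume A: "A \<in> carrier_mat 2 2"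
    show "chan0 p e q f A = mat 2 2 (\<lambda>(i,j). \<Sum>x<2. complex_of_real ((\<lambda>_. 1/2::real) x) * (U x * A * mat_adjoint (U x)) $$ (i,j))"
    proof (rule eq_matI)
      fix i j assume "i < dim_row (mat 2 2 (\<lambda>(i,j). \<Sum>x<2. complex_of_real ((\<lambda>_. 1/2::real) x) * (U x * A * mat_adjoint (U x)) $$ (i,j)))"
        "j < dim_col (mat 2 2 (\<lambda>(i,j). \<Sum>x<2. complex_of_real ((\<lambda>_. 1/2::real) x) * (U x * A * mat_adjoint (U x)) $$ (i,j)))"
      hence ij: "i < 2" "j < 2" by simp_all
      have "(mat 2 2 (\<lambda>(i,j). \<Sum>x<2. complex_of_real ((\<lambda>_. 1/2::real) x) * (U x * A * mat_adjoint (U x)) $$ (i,j))) $$ (i,j)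
         = 1/2 * (Wm p e q f 1 * A * mat_adjoint (Wm p e q f 1)) $$ (i,j) + 1/2 * (Wm p e q f (-1) * A * mat_adjoint (Wm p e q f (-1))) $$ (i,j)"
        using ij by (simp add: sum2 U_def)
      also have "\<dots> = sandwich p A p * (e$i * cnj (e$j)) + sandwich q A q * (f$i * cnj (f$j))"
        unfolding Wm_conj[OF pc qc A ij] by (simp add: field_simps)
      also have "\<dots> = chan0 p e q f A $$ (i,j)" using ij by (simp add: chan0_idx)
      finally show "chan0 p e q f A $$ (i,j) = (mat 2 2 (\<lambda>(i,j). \<Sum>x<2. complex_of_real ((\<lambda>_. 1/2::real) x) * (U x * A * mat_adjoint (U x)) $$ (i,j))) $$ (i,j)" by simp
    qed simp_all
  qed
qed


lemma braket_self: "unit_vec2 v \<Longrightarrow> braket v v = 1"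
  using unit2[of v] by (simp add: braket2 mult.commute)

lemma obj_chan0:
  assumes psi: "unit_vec2 \<psi>" and phi: "unit_vec2 \<phi>" and e: "unit_vec2 e" and f: "unit_vec2 f"
    and ef: "braket e f = 0"
    and ab: "a * cnj a + b * cnj b = 1"
    and val: "cnj a * (of_real ((cmod (\<psi>$0))^2 - (cmod (\<phi>$0))^2) * a + (\<psi>$0 * cnj (\<psi>$1) - \<phi>$0 * cnj (\<phi>$1)) * b)
       + cnj b * (cnj (\<psi>$0 * cnj (\<psi>$1) - \<phi>$0 * cnj (\<phi>$1)) * a - of_real ((cmod (\<psi>$0))^2 - (cmod (\<phi>$0))^2) * b)
       = of_real (sqrt (1 - (cmod (braket \<psi> \<phi>))^2))"
  shows "unit_vec2 (v2 a b)" "unit_vec2 (v2 (- cnj b) (cnj a))" "braket (v2 a b) (v2 (- cnj b) (cnj a)) = 0"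
    and "discr_obj \<psi> \<phi> e f (chan0 (v2 a b) e (v2 (- cnj b) (cnj a)) f)
       = complex_of_real ((1 + sqrt (1 - (cmod (braket \<psi> \<phi>))^2)) / 2)"
proof -
  define x where "x = (cmod (\<psi>$0))^2 - (cmod (\<phi>$0))^2"
  define y where "y = \<psi>$0 * cnj (\<psi>$1) - \<phi>$0 * cnj (\<phi>$1)"
  define l where "l = sqrt (1 - (cmod (braket \<psi> \<phi>))^2)"
  note D = delta_facts[OF psi phi, folded x_def y_def l_def]
  define p where "p = v2 a b"
  define q where "q = v2 (- cnj b) (cnj a)"
  show p: "unit_vec2 (v2 a b)" by (rule unit_v2[OF ab])
  show q: "unit_vec2 (v2 (- cnj b) (cnj a))" by (rule unit_v2) (use ab in \<open>simp add: algebra_simps\<close>)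
  show pq: "braket (v2 a b) (v2 (- cnj b) (cnj a)) = 0" by (simp add: braket2)
  have pc: "p \<in> carrier_vec 2" and qc: "q \<in> carrier_vec 2" unfolding p_def q_def by auto
  have ec: "e \<in> carrier_vec 2" and fc: "f \<in> carrier_vec 2" and psc: "\<psi> \<in> carrier_vec 2" and phc: "\<phi> \<in> carrier_vec 2"
    using e f psi phi unit2 by auto
  have ee: "braket e e = 1" and ff: "braket f f = 1" using braket_self e f by auto
  have fe: "braket f e = 0"
  proof -
    have "braket f e = cnj (braket e f)" using ec fc by (simp add: braket2 mult.commute)
    thus ?thesis using ef by simp
  qed
  have r1: "ketbra \<psi> \<psi> \<in> carrier_mat 2 2" and r2: "ketbra \<phi> \<phi> \<in> carrier_mat 2 2"
    using psc phc ketbra_carrier by auto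
  have se: "sandwich e (chan0 p e q f X) e = sandwich p X p" for X
    unfolding chan0_def sandwich_add[OF ec mp_carrier mp_carrier] sandwich_mp[OF ec ec] sandwich_mp[OF ec fc] ee ef by simp
  have sf: "sandwich f (chan0 p e q f X) f = sandwich q X q" for X
    unfolding chan0_def sandwich_add[OF fc mp_carrier mp_carrier] sandwich_mp[OF fc ec] sandwich_mp[OF fc fc] ff fe by simp
  have c2: "sandwich q (ketbra \<phi> \<phi>) q = 1 - sandwich p (ketbra \<phi> \<phi>) p"
    using sandwich_complete[OF p[folded p_def] q[folded q_def] pq[folded p_def q_def] r2] ketbra_self_trace[OF phi]
    by (simp add: eq_diff_eq add.commute)
  have "sandwich p (ketbra \<psi> \<psi>) p - sandwich p (ketbra \<phi> \<phi>) p =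
     cnj a * ((\<psi>$0 * cnj (\<psi>$0) - \<phi>$0 * cnj (\<phi>$0)) * a + (\<psi>$0 * cnj (\<psi>$1) - \<phi>$0 * cnj (\<phi>$1)) * b)
   + cnj b * ((\<psi>$1 * cnj (\<psi>$0) - \<phi>$1 * cnj (\<phi>$0)) * a + (\<psi>$1 * cnj (\<psi>$1) - \<phi>$1 * cnj (\<phi>$1)) * b)"
    unfolding p_def using psc phc r1 r2 by (simp add: sandwich2 ketbra_idx algebra_simps)
  also have "\<dots> = cnj a * (of_real x * a + y * b) + cnj b * (cnj y * a - of_real x * b)"
  proof -
    have "\<psi>$1 * cnj (\<psi>$0) - \<phi>$1 * cnj (\<phi>$0) = cnj y" unfolding y_def by (simp add: mult.commute)
    moreover have "\<psi>$1 * cnj (\<psi>$1) - \<phi>$1 * cnj (\<phi>$1) = - of_real x" using D(5) by simp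
    ultimately show ?thesis unfolding D(4)[symmetric] y_def[symmetric] by simp
  qed
  also have "\<dots> = of_real l" using val unfolding x_def y_def l_def .
  finally have dd: "sandwich p (ketbra \<psi> \<psi>) p - sandwich p (ketbra \<phi> \<phi>) p = of_real l" .
  have "discr_obj \<psi> \<phi> e f (chan0 p e q f) = 1/2 * sandwich p (ketbra \<psi> \<psi>) p + 1/2 * (1 - sandwich p (ketbra \<phi> \<phi>) p)"
    unfolding discr_obj_def se sf c2 ..
  also have "\<dots> = 1/2 + 1/2 * (sandwich p (ketbra \<psi> \<psi>) p - sandwich p (ketbra \<phi> \<phi>) p)"
    by (simp add: algebra_simps)
  also have "\<dots> = complex_of_real ((1 + l) / 2)" unfolding dd by (simp add: field_simps)
  finally show "discr_obj \<psi> \<phi> e f (chan0 (v2 a b) e (v2 (- cnj b) (cnj a)) f)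
       = complex_of_real ((1 + sqrt (1 - (cmod (braket \<psi> \<phi>))^2)) / 2)" unfolding p_def q_def l_def .
qed


lemma id_tensor_1:
  assumes M: "M \<in> carrier_mat 2 2" and PM: "\<Psi> M \<in> carrier_mat 2 2"
  shows "id_tensor 1 \<Psi> M = \<Psi> M"
proof -
  have b: "block2 M 0 0 = M"
    by (rule eq_matI) (use M in auto)
  show ?thesis
  proof (rule eq_matI)
    fix i j assume "i < dim_row (\<Psi> M)" "j < dim_col (\<Psi> M)"
    hence ij: "i < 2" "j < 2" using PM by auto
    thus "id_tensor 1 \<Psi> M $$ (i,j) = \<Psi> M $$ (i,j)" by (simp add: id_tensor_idx b)
  qed (use PM in auto)
qed

lemma channel_hyps:
  assumes "\<Psi> \<in> channels"
  shows "\<forall>A\<in>carrier_mat 2 2. \<Psi> A \<in> carrier_mat 2 2"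
    "\<forall>A\<in>carrier_mat 2 2. \<forall>B\<in>carrier_mat 2 2. \<Psi> (A + B) = \<Psi> A + \<Psi> B"
    "\<forall>M. psd 2 M \<longrightarrow> psd 2 (\<Psi> M)"
    "\<forall>A\<in>carrier_mat 2 2. mtrace (\<Psi> A) = mtrace A"
proof -
  have lin: "linear_map2 \<Psi>" and cp: "completely_positive \<Psi>" and tp: "trace_preserving \<Psi>"
    using assms unfolding channels_def by auto
  show c: "\<forall>A\<in>carrier_mat 2 2. \<Psi> A \<in> carrier_mat 2 2" using lin unfolding linear_map2_def by auto
  show "\<forall>A\<in>carrier_mat 2 2. \<forall>B\<in>carrier_mat 2 2. \<Psi> (A + B) = \<Psi> A + \<Psi> B" using lin unfolding linear_map2_def by auto
  show "\<forall>A\<in>carrier_mat 2 2. mtrace (\<Psi> A) = mtrace A" using tp unfolding trace_preserving_def by auto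
  show "\<forall>M. psd 2 M \<longrightarrow> psd 2 (\<Psi> M)"
  proof (intro allI impI)
    fix M assume M: "psd 2 M"
    have Mc: "M \<in> carrier_mat 2 2" using M unfolding psd_def by auto
    have "psd (1*2) M \<longrightarrow> psd (1*2) (id_tensor 1 \<Psi> M)" using cp unfolding completely_positive_def by blast
    hence "psd 2 (id_tensor 1 \<Psi> M)" using M by simp
    thus "psd 2 (\<Psi> M)" using id_tensor_1[OF Mc] c Mc by simp
  qed
qed

lemma quad_sum:
  fixes g00 g01 g10 g11 :: "nat \<Rightarrow> complex"
  shows "cnj v0 * ((\<Sum>x<n. g00 x) * v0 + (\<Sum>x<n. g01 x) * v1) + cnj v1 * ((\<Sum>x<n. g10 x) * v0 + (\<Sum>x<n. g11 x) * v1)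
   = (\<Sum>x<n. cnj v0 * (g00 x * v0 + g01 x * v1) + cnj v1 * (g10 x * v0 + g11 x * v1))"
  by (simp add: sum_distrib_left sum_distrib_right sum.distrib algebra_simps)

lemma ring_Q:
  fixes u00 u01 u10 u11 a00 a01 a10 a11 v0 v1 :: complex
  shows "cnj v0 * ((u00 * (a00 * cnj u00 + a01 * cnj u01) + u01 * (a10 * cnj u00 + a11 * cnj u01)) * v0
                 + (u00 * (a00 * cnj u10 + a01 * cnj u11) + u01 * (a10 * cnj u10 + a11 * cnj u11)) * v1)
       + cnj v1 * ((u10 * (a00 * cnj u00 + a01 * cnj u01) + u11 * (a10 * cnj u00 + a11 * cnj u01)) * v0
                 + (u10 * (a00 * cnj u10 + a01 * cnj u11) + u11 * (a10 * cnj u10 + a11 * cnj u11)) * v1)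
   = cnj (cnj u00 * v0 + cnj u10 * v1) * (a00 * (cnj u00 * v0 + cnj u10 * v1) + a01 * (cnj u01 * v0 + cnj u11 * v1))
   + cnj (cnj u01 * v0 + cnj u11 * v1) * (a10 * (cnj u00 * v0 + cnj u10 * v1) + a11 * (cnj u01 * v0 + cnj u11 * v1))"
  by (simp add: algebra_simps)


lemma unitary_trace:
  assumes U: "unitary2 U" and A: "A \<in> carrier_mat 2 2"
  shows "(U * A * mat_adjoint U) $$ (0,0) + (U * A * mat_adjoint U) $$ (1,1) = A$$(0,0) + A$$(1,1)"
proof -
  have Uc: "U \<in> carrier_mat 2 2" and UU: "U * mat_adjoint U = 1\<^sub>m 2" using U unfolding unitary2_def by auto
  have aU: "mat_adjoint U \<in> carrier_mat 2 2" by (rule adj_carrier[OF Uc])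
  have UU': "mat_adjoint U * U = 1\<^sub>m 2" by (rule mat_mult_left_right_inverse[OF Uc aU UU])
  have z: "(0::nat) < 2" "(1::nat) < 2" by auto
  have g: "(mat_adjoint U * U) $$ (l,k) = cnj (U$$(0,l)) * U$$(0,k) + cnj (U$$(1,l)) * U$$(1,k)" if "l < 2" "k < 2" for l k
    unfolding mult2_idx[OF aU Uc that] adj_idx[OF Uc that(1) z(1)] adj_idx[OF Uc that(1) z(2)] ..
  have g00: "cnj (U$$(0,0)) * U$$(0,0) + cnj (U$$(1,0)) * U$$(1,0) = 1" using g[OF z(1) z(1)] UU' by simp
  have g11: "cnj (U$$(0,1)) * U$$(0,1) + cnj (U$$(1,1)) * U$$(1,1) = 1" using g[OF z(2) z(2)] UU' by simp
  have g10: "cnj (U$$(0,1)) * U$$(0,0) + cnj (U$$(1,1)) * U$$(1,0) = 0" using g[OF z(2) z(1)] UU' by simp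
  have g01: "cnj (U$$(0,0)) * U$$(0,1) + cnj (U$$(1,0)) * U$$(1,1) = 0" using g[OF z(1) z(2)] UU' by simp
  have "(U * A * mat_adjoint U) $$ (0,0) + (U * A * mat_adjoint U) $$ (1,1) =
     A$$(0,0) * (cnj (U$$(0,0)) * U$$(0,0) + cnj (U$$(1,0)) * U$$(1,0))
   + A$$(0,1) * (cnj (U$$(0,1)) * U$$(0,0) + cnj (U$$(1,1)) * U$$(1,0))
   + A$$(1,0) * (cnj (U$$(0,0)) * U$$(0,1) + cnj (U$$(1,0)) * U$$(1,1))
   + A$$(1,1) * (cnj (U$$(0,1)) * U$$(0,1) + cnj (U$$(1,1)) * U$$(1,1))"
    unfolding conj_idx[OF Uc A z(1) z(1)] conj_idx[OF Uc A z(2) z(2)] by (simp add: algebra_simps)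
  also have "\<dots> = A$$(0,0) + A$$(1,1)" unfolding g00 g11 g10 g01 by simp
  finally show ?thesis .
qed

lemma unitary_quad:
  assumes Uc: "U \<in> carrier_mat 2 2" and M: "psd 2 M"
  shows "0 \<le> cnj v0 * ((U * M * mat_adjoint U) $$ (0,0) * v0 + (U * M * mat_adjoint U) $$ (0,1) * v1)
            + cnj v1 * ((U * M * mat_adjoint U) $$ (1,0) * v0 + (U * M * mat_adjoint U) $$ (1,1) * v1)"
proof -
  have Mc: "M \<in> carrier_mat 2 2" using M unfolding psd_def by auto
  have z: "(0::nat) < 2" "(1::nat) < 2" by auto
  show ?thesis
    unfolding conj_idx[OF Uc Mc z(1) z(1)] conj_idx[OF Uc Mc z(1) z(2)] conj_idx[OF Uc Mc z(2) z(1)] conj_idx[OF Uc Mc z(2) z(2)]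
      ring_Q by (rule psd2_quad[OF M])
qed

lemma unitary_add:
  fixes U A B :: "complex mat"
  assumes Uc: "U \<in> carrier_mat 2 2" and A: "A \<in> carrier_mat 2 2" and B: "B \<in> carrier_mat 2 2" and ij: "i < 2" "j < 2"
  shows "(U * (A + B) * mat_adjoint U) $$ (i,j) = (U * A * mat_adjoint U) $$ (i,j) + (U * B * mat_adjoint U) $$ (i,j)"
proof -
  have AB: "A + B \<in> carrier_mat 2 2" using A B by simp
  show ?thesis unfolding conj_idx[OF Uc AB ij] conj_idx[OF Uc A ij] conj_idx[OF Uc B ij]
    using A B by (simp add: algebra_simps)
qed


lemma ru_hyps:
  assumes "\<Psi> \<in> random_unitary"
  shows "\<forall>A\<in>carrier_mat 2 2. \<Psi> A \<in> carrier_mat 2 2"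
    "\<forall>A\<in>carrier_mat 2 2. \<forall>B\<in>carrier_mat 2 2. \<Psi> (A + B) = \<Psi> A + \<Psi> B"
    "\<forall>M. psd 2 M \<longrightarrow> psd 2 (\<Psi> M)"
    "\<forall>A\<in>carrier_mat 2 2. mtrace (\<Psi> A) = mtrace A"
proof -
  obtain n :: nat and pr :: "nat \<Rightarrow> real" and U where
    h1: "\<forall>x<n. pr x \<ge> 0 \<and> unitary2 (U x)" and h2: "(\<Sum>x<n. pr x) = 1"
    and h3: "\<forall>A \<in> carrier_mat 2 2. \<Psi> A = mat 2 2 (\<lambda>(i,j). \<Sum>x<n. complex_of_real (pr x) * (U x * A * mat_adjoint (U x)) $$ (i,j))"
    using assms unfolding random_unitary_def by blast
  have Uc: "U x \<in> carrier_mat 2 2" if "x < n" for x using h1 that unfolding unitary2_def by auto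
  have z: "(0::nat) < 2" "(1::nat) < 2" by auto
  show "\<forall>A\<in>carrier_mat 2 2. \<Psi> A \<in> carrier_mat 2 2" using h3 by simp
  show "\<forall>A\<in>carrier_mat 2 2. \<forall>B\<in>carrier_mat 2 2. \<Psi> (A + B) = \<Psi> A + \<Psi> B"
  proof (intro ballI)
    fix A B :: "complex mat" assume A: "A \<in> carrier_mat 2 2" and B: "B \<in> carrier_mat 2 2"
    have AB: "A + B \<in> carrier_mat 2 2" using A B by simp
    show "\<Psi> (A + B) = \<Psi> A + \<Psi> B"
      unfolding h3[rule_format, OF AB] h3[rule_format, OF A] h3[rule_format, OF B]
    proof (rule eq_matI)
      fix i j assume "i < dim_row (mat 2 2 (\<lambda>(i,j). \<Sum>x<n. complex_of_real (pr x) * (U x * A * mat_adjoint (U x)) $$ (i,j)) +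
         mat 2 2 (\<lambda>(i,j). \<Sum>x<n. complex_of_real (pr x) * (U x * B * mat_adjoint (U x)) $$ (i,j)))"
        "j < dim_col (mat 2 2 (\<lambda>(i,j). \<Sum>x<n. complex_of_real (pr x) * (U x * A * mat_adjoint (U x)) $$ (i,j)) +
         mat 2 2 (\<lambda>(i,j). \<Sum>x<n. complex_of_real (pr x) * (U x * B * mat_adjoint (U x)) $$ (i,j)))"
      hence ij: "i < 2" "j < 2" by simp_all
      have "(\<Sum>x<n. complex_of_real (pr x) * (U x * (A + B) * mat_adjoint (U x)) $$ (i,j))
          = (\<Sum>x<n. complex_of_real (pr x) * (U x * A * mat_adjoint (U x)) $$ (i,j) + complex_of_real (pr x) * (U x * B * mat_adjoint (U x)) $$ (i,j))"
        by (rule sum.cong[OF refl]) (simp add: unitary_add[OF Uc A B ij] distrib_left)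
      thus "mat 2 2 (\<lambda>(i,j). \<Sum>x<n. complex_of_real (pr x) * (U x * (A + B) * mat_adjoint (U x)) $$ (i,j)) $$ (i,j) =
         (mat 2 2 (\<lambda>(i,j). \<Sum>x<n. complex_of_real (pr x) * (U x * A * mat_adjoint (U x)) $$ (i,j)) +
         mat 2 2 (\<lambda>(i,j). \<Sum>x<n. complex_of_real (pr x) * (U x * B * mat_adjoint (U x)) $$ (i,j))) $$ (i,j)"
        using ij by (simp add: sum.distrib)
    qed simp_all
  qed
  show "\<forall>M. psd 2 M \<longrightarrow> psd 2 (\<Psi> M)"
  proof (intro allI impI)
    fix M assume M: "psd 2 M"
    have Mc: "M \<in> carrier_mat 2 2" using M unfolding psd_def by auto
    define T where "T x = U x * M * mat_adjoint (U x)" for x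
    show "psd 2 (\<Psi> M)"
      unfolding psd_def
    proof (intro conjI ballI)
      show "\<Psi> M \<in> carrier_mat 2 2" using h3 Mc by simp
      fix v :: "complex vec" assume v: "v \<in> carrier_vec 2"
      have "braket v (\<Psi> M *\<^sub>v v) = cnj (v$0) * ((\<Sum>x<n. of_real (pr x) * T x $$ (0,0)) * v$0 + (\<Sum>x<n. of_real (pr x) * T x $$ (0,1)) * v$1)
          + cnj (v$1) * ((\<Sum>x<n. of_real (pr x) * T x $$ (1,0)) * v$0 + (\<Sum>x<n. of_real (pr x) * T x $$ (1,1)) * v$1)"
        unfolding h3[rule_format, OF Mc] T_def using v by (simp add: braket2 mulv2)
      also have "\<dots> = (\<Sum>x<n. cnj (v$0) * (of_real (pr x) * T x $$ (0,0) * v$0 + of_real (pr x) * T x $$ (0,1) * v$1)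
          + cnj (v$1) * (of_real (pr x) * T x $$ (1,0) * v$0 + of_real (pr x) * T x $$ (1,1) * v$1))"
        by (rule quad_sum)
      also have "\<dots> = (\<Sum>x<n. of_real (pr x) * (cnj (v$0) * (T x $$ (0,0) * v$0 + T x $$ (0,1) * v$1)
          + cnj (v$1) * (T x $$ (1,0) * v$0 + T x $$ (1,1) * v$1)))"
        by (rule sum.cong[OF refl]) (simp add: algebra_simps)
      also have "0 \<le> \<dots>"
      proof (rule sum_nonneg)
        fix x assume "x \<in> {..<n}"
        hence x: "x < n" by simp
        have "0 \<le> complex_of_real (pr x)" using h1 x by (simp add: less_eq_complex_def)
        moreover have "0 \<le> cnj (v$0) * (T x $$ (0,0) * v$0 + T x $$ (0,1) * v$1) + cnj (v$1) * (T x $$ (1,0) * v$0 + T x $$ (1,1) * v$1)"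
          unfolding T_def by (rule unitary_quad[OF Uc[OF x] M])
        ultimately show "0 \<le> of_real (pr x) * (cnj (v$0) * (T x $$ (0,0) * v$0 + T x $$ (0,1) * v$1)
          + cnj (v$1) * (T x $$ (1,0) * v$0 + T x $$ (1,1) * v$1))" by (rule mult_nonneg_nonneg)
      qed
      finally show "0 \<le> braket v (\<Psi> M *\<^sub>v v)" .
    qed
  qed
  show "\<forall>A\<in>carrier_mat 2 2. mtrace (\<Psi> A) = mtrace A"
  proof
    fix A :: "complex mat" assume A: "A \<in> carrier_mat 2 2"
    have "mtrace (\<Psi> A) = (\<Sum>x<n. of_real (pr x) * (U x * A * mat_adjoint (U x)) $$ (0,0)) + (\<Sum>x<n. of_real (pr x) * (U x * A * mat_adjoint (U x)) $$ (1,1))"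
      unfolding h3[rule_format, OF A] by (simp add: mtrace2)
    also have "\<dots> = (\<Sum>x<n. of_real (pr x) * (A$$(0,0) + A$$(1,1)))"
      unfolding sum.distrib[symmetric]
    proof (rule sum.cong[OF refl])
      fix x assume "x \<in> {..<n}"
      hence x: "x < n" by simp
      have "unitary2 (U x)" using h1 x by auto
      thus "of_real (pr x) * (U x * A * mat_adjoint (U x)) $$ (0,0) + of_real (pr x) * (U x * A * mat_adjoint (U x)) $$ (1,1)
          = of_real (pr x) * (A$$(0,0) + A$$(1,1))"
        using unitary_trace[OF _ A] by (simp add: distrib_left[symmetric])
    qed
    also have "\<dots> = of_real (\<Sum>x<n. pr x) * (A$$(0,0) + A$$(1,1))" by (simp add: sum_distrib_right)
    also have "\<dots> = mtrace A" using h2 A by (simp add: mtrace2)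
    finally show "mtrace (\<Psi> A) = mtrace A" .
  qed
qed


theorem proposition10:
  fixes \<psi> \<phi> e f :: "complex vec"
  assumes "unit_vec2 \<psi>" and "unit_vec2 \<phi>" and "unit_vec2 e" and "unit_vec2 f"
    and "braket e f = 0"
  shows "\<forall>X \<in> {random_unitary, unital_ent_breaking, ent_breaking, channels}.
     (\<exists>\<Psi> \<in> X. discr_obj \<psi> \<phi> e f \<Psi> =
         complex_of_real ((1 + sqrt (1 - (cmod (braket \<psi> \<phi>))\<^sup>2)) / 2)) \<and>
     (\<forall>\<Psi> \<in> X. discr_obj \<psi> \<phi> e f \<Psi> \<le>
         complex_of_real ((1 + sqrt (1 - (cmod (braket \<psi> \<phi>))\<^sup>2)) / 2))"
proof -
  note psi = assms(1) and phi = assms(2) and e = assms(3) and f = assms(4) and ef = assms(5)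
  define x where "x = (cmod (\<psi>$0))^2 - (cmod (\<phi>$0))^2"
  define y where "y = \<psi>$0 * cnj (\<psi>$1) - \<phi>$0 * cnj (\<phi>$1)"
  define l where "l = sqrt (1 - (cmod (braket \<psi> \<phi>))^2)"
  note D = delta_facts[OF psi phi, folded x_def y_def l_def]
  obtain a b where ab: "a * cnj a + b * cnj b = 1"
    and val: "cnj a * (of_real x * a + y * b) + cnj b * (cnj y * a - of_real x * b) = of_real l"
    using exists_p[OF D(1) D(3)] by blast
  note O = obj_chan0[OF psi phi e f ef ab val[unfolded x_def y_def l_def]]
  define \<Psi>0 where "\<Psi>0 = chan0 (v2 a b) e (v2 (- cnj b) (cnj a)) f"
  have ch: "\<Psi>0 \<in> channels" and un: "\<Psi>0 (1\<^sub>m 2) = 1\<^sub>m 2"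
    unfolding \<Psi>0_def using chan0_channel[OF O(1) O(2) O(3) e f ef] by auto
  have eb: "\<Psi>0 \<in> ent_breaking"
    unfolding ent_breaking_def \<Psi>0_def using ch[unfolded \<Psi>0_def] eb_chan0[OF O(1) O(2) O(3) e f] by auto
  have ue: "\<Psi>0 \<in> unital_ent_breaking" unfolding unital_ent_breaking_def using eb un by auto
  have ru: "\<Psi>0 \<in> random_unitary" unfolding \<Psi>0_def by (rule chan0_random_unitary[OF O(1) O(2) O(3) e f ef])
  have val0: "discr_obj \<psi> \<phi> e f \<Psi>0 = complex_of_real ((1 + sqrt (1 - (cmod (braket \<psi> \<phi>))\<^sup>2)) / 2)"
    unfolding \<Psi>0_def by (rule O(4))
  have ubC: "discr_obj \<psi> \<phi> e f \<Psi> \<le> complex_of_real ((1 + sqrt (1 - (cmod (braket \<psi> \<phi>))\<^sup>2)) / 2)"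
    if "\<Psi> \<in> channels" for \<Psi>
    using UB[OF psi phi e f ef channel_hyps[OF that]] .
  have ubR: "discr_obj \<psi> \<phi> e f \<Psi> \<le> complex_of_real ((1 + sqrt (1 - (cmod (braket \<psi> \<phi>))\<^sup>2)) / 2)"
    if "\<Psi> \<in> random_unitary" for \<Psi>
    using UB[OF psi phi e f ef ru_hyps[OF that]] .
  have sub1: "ent_breaking \<subseteq> channels" unfolding ent_breaking_def by auto
  have sub2: "unital_ent_breaking \<subseteq> channels" unfolding unital_ent_breaking_def using sub1 by auto
  show ?thesis
    using val0 ch eb ue ru ubC ubR sub1 sub2 by blast
qed


end
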